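(* Let $\kappa$ be a regular uncountable cardinal, $\lambda=\kappa^+$, and $(T,<_T)$ a tree of height $\kappa+1$ and cardinality $\lambda$. Let $B_T$ be the Boolean algebra generated by elements $\{x_t:t\in T\}$ freely subject only to the relations $x_s\le x_t$ for $s\le_T t$ (i.e. the quotient of the free Boolean algebra on $\{x_t:t\in T\}$ by the ideal generated by $\{x_s\cdot -x_t: s\le_T t\}$), and for $Y\subseteq T$ let $B_Y$ be the subalgebra of $B_T$ generated by $\{x_t:t\in Y\}$. If $Y$ is a subtree of $T$, then $B_Y\le_\kappa B_T$ (with respect to the Boolean partial order of $B_T$) if and only if $Y$ is closed in $T$. In particular, if the game $G_\kappa(T)$ is undetermined, then so is $G_\kappa(B_T)$.
   Context: For a partial order $(A,\le)$, $\mathrm{cf}$/$\mathrm{ci}$ denote the least cardinality of a cofinal/coinitial subset; $R\downarrow a=\{x\in R:x\le a\}$, $R\uparrow a=\{x\in R:a\le x\}$; $R\le_\kappa A$ means for all $a\in A$, $\mathrm{cf}(R\downarrow a)<\kappa$ and $\mathrm{ci}(R\uparrow a)<\kappa$. The game $G_\kappa(A)$: Players I and II alternately choose $x_\alpha$ (I) and $y_\alpha$ (II), $\alpha<\kappa$, subsets of $A$ of size $<\kappa$ with $x_\alpha\subseteq y_\alpha$ and $\bigcup_{\nu<\alpha}y_\nu\subseteq x_\alpha$; II wins iff $\bigcup_{\alpha<\kappa}x_\alpha\le_\kappa A$, otherwise I wins. A game is undetermined if neither player has a winning strategy. Tree notions: $Y\subseteq T$ is a subtree if $y\in Y$ and $x<_T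 y$ imply $x\in Y$; $Y$ is closed in $T$ if every element of the $\kappa$-th level of $T$ all of whose $<_T$-predecessors lie in $Y$ belongs to $Y$. *)

theory Defs
  imports Main
begin

(* ===== Cardinal bookkeeping =====
   A cardinal kappa is represented by a cardinal-order relation k :: 'k rel
   (Card_order k); "|X| < kappa" is  |X| <o k ;  positions alpha < kappa of a game
   are the elements of Field k, ordered by k. *)

definition cf_less :: "'k rel \<Rightarrow> ('b \<Rightarrow> 'b \<Rightarrow> bool) \<Rightarrow> 'b set \<Rightarrow> bool" where
  "cf_less k le P \<longleftrightarrow> (\<exists>C\<subseteq>P. (\<forall>x\<in>P. \<exists>c\<in>C. le x c) \<and> (card_of C, k) \<in> ordLess)"

definition ci_less :: "'k rel \<Rightarrow> ('b \<Rightarrow> 'b \<Rightarrow> bool) \<Rightarrow> 'b set \<Rightarrow> bool" where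
  "ci_less k le P \<longleftrightarrow> (\<exists>C\<subseteq>P. (\<forall>x\<in>P. \<exists>c\<in>C. le c x) \<and> (card_of C, k) \<in> ordLess)"

definition kappa_sub :: "'k rel \<Rightarrow> ('b \<Rightarrow> 'b \<Rightarrow> bool) \<Rightarrow> 'b set \<Rightarrow> 'b set \<Rightarrow> bool" where
  "kappa_sub k le R A \<longleftrightarrow> R \<subseteq> A \<and>
     (\<forall>a\<in>A. cf_less k le {x\<in>R. le x a} \<and> ci_less k le {x\<in>R. le a x})"

(* ===== The game G_kappa(A) =====
   A play is a pair of sequences xs (moves of I) and ys (moves of II) indexed by
   the stages alpha \<in> Field k. *)

definition stage_less :: "'k rel \<Rightarrow> 'k \<Rightarrow> 'k \<Rightarrow> bool" where
  "stage_less k \<nu> \<alpha> \<longleftrightarrow> (\<nu>, \<alpha>) \<in> k \<and> \<nu> \<noteq> \<alpha>"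

definition legal_I :: "'k rel \<Rightarrow> 'b set \<Rightarrow> ('k \<Rightarrow> 'b set) \<Rightarrow> ('k \<Rightarrow> 'b set) \<Rightarrow> 'k \<Rightarrow> bool" where
  "legal_I k A xs ys \<alpha> \<longleftrightarrow> xs \<alpha> \<subseteq> A \<and> (card_of (xs \<alpha>), k) \<in> ordLess \<and>
      (\<forall>\<nu>. stage_less k \<nu> \<alpha> \<longrightarrow> ys \<nu> \<subseteq> xs \<alpha>)"

definition legal_II :: "'k rel \<Rightarrow> 'b set \<Rightarrow> ('k \<Rightarrow> 'b set) \<Rightarrow> ('k \<Rightarrow> 'b set) \<Rightarrow> 'k \<Rightarrow> bool" where
  "legal_II k A xs ys \<alpha> \<longleftrightarrow> xs \<alpha> \<subseteq> ys \<alpha> \<and> ys \<alpha> \<subseteq> A \<and> (card_of (ys \<alpha>), k) \<in> ordLess"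

definition player_I_wins ::
  "'k rel \<Rightarrow> ('b \<Rightarrow> 'b \<Rightarrow> bool) \<Rightarrow> 'b set \<Rightarrow> ('k \<Rightarrow> 'b set) \<Rightarrow> ('k \<Rightarrow> 'b set) \<Rightarrow> bool" where
  "player_I_wins k le A xs ys \<longleftrightarrow>
     (\<exists>\<alpha>\<in>Field k. (\<forall>\<nu>. stage_less k \<nu> \<alpha> \<longrightarrow> legal_I k A xs ys \<nu> \<and> legal_II k A xs ys \<nu>)
                 \<and> legal_I k A xs ys \<alpha> \<and> \<not> legal_II k A xs ys \<alpha>)
   \<or> ((\<forall>\<alpha>\<in>Field k. legal_I k A xs ys \<alpha> \<and> legal_II k A xs ys \<alpha>)
      \<and> \<not> kappa_sub k le (\<Union>\<alpha>\<in>Field k. xs \<alpha>) A)"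

definition strategy_I :: "'k rel \<Rightarrow> ('k \<Rightarrow> ('k \<Rightarrow> 'b set) \<Rightarrow> 'b set) \<Rightarrow> bool" where
  "strategy_I k \<sigma> \<longleftrightarrow> (\<forall>\<alpha>\<in>Field k. \<forall>ys ys'.
      (\<forall>\<nu>. stage_less k \<nu> \<alpha> \<longrightarrow> ys \<nu> = ys' \<nu>) \<longrightarrow> \<sigma> \<alpha> ys = \<sigma> \<alpha> ys')"

definition strategy_II :: "'k rel \<Rightarrow> ('k \<Rightarrow> ('k \<Rightarrow> 'b set) \<Rightarrow> 'b set) \<Rightarrow> bool" where
  "strategy_II k \<tau> \<longleftrightarrow> (\<forall>\<alpha>\<in>Field k. \<forall>xs xs'.
      (\<forall>\<nu>. (\<nu>, \<alpha>) \<in> k \<longrightarrow> xs \<nu> = xs' \<nu>) \<longrightarrow> \<tau> \<alpha> xs = \<tau> \<alpha> xs')"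

definition winning_I ::
  "'k rel \<Rightarrow> ('b \<Rightarrow> 'b \<Rightarrow> bool) \<Rightarrow> 'b set \<Rightarrow> ('k \<Rightarrow> ('k \<Rightarrow> 'b set) \<Rightarrow> 'b set) \<Rightarrow> bool" where
  "winning_I k le A \<sigma> \<longleftrightarrow> strategy_I k \<sigma> \<and>
     (\<forall>xs ys. (\<forall>\<alpha>\<in>Field k. xs \<alpha> = \<sigma> \<alpha> ys) \<longrightarrow> player_I_wins k le A xs ys)"

definition winning_II ::
  "'k rel \<Rightarrow> ('b \<Rightarrow> 'b \<Rightarrow> bool) \<Rightarrow> 'b set \<Rightarrow> ('k \<Rightarrow> ('k \<Rightarrow> 'b set) \<Rightarrow> 'b set) \<Rightarrow> bool" where
  "winning_II k le A \<tau> \<longleftrightarrow> strategy_II k \<tau> \<and>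
     (\<forall>xs ys. (\<forall>\<alpha>\<in>Field k. ys \<alpha> = \<tau> \<alpha> xs) \<longrightarrow> \<not> player_I_wins k le A xs ys)"

definition game_undetermined :: "'k rel \<Rightarrow> ('b \<Rightarrow> 'b \<Rightarrow> bool) \<Rightarrow> 'b set \<Rightarrow> bool" where
  "game_undetermined k le A \<longleftrightarrow>
     \<not> (\<exists>\<sigma>. winning_I k le A \<sigma>) \<and> \<not> (\<exists>\<tau>. winning_II k le A \<tau>)"

definition tree_le :: "('a \<Rightarrow> 'a \<Rightarrow> bool) \<Rightarrow> 'a \<Rightarrow> 'a \<Rightarrow> bool" where
  "tree_le lt s t \<longleftrightarrow> lt s t \<or> s = t"

definition pred_rel :: "'a set \<Rightarrow> ('a \<Rightarrow> 'a \<Rightarrow> bool) \<Rightarrow> 'a \<Rightarrow> 'a rel" where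
  "pred_rel T lt t = {(x, y). x \<in> T \<and> y \<in> T \<and> lt x t \<and> lt y t \<and> tree_le lt x y}"

definition is_tree :: "'a set \<Rightarrow> ('a \<Rightarrow> 'a \<Rightarrow> bool) \<Rightarrow> bool" where
  "is_tree T lt \<longleftrightarrow>
     (\<forall>t\<in>T. \<not> lt t t) \<and>
     (\<forall>r\<in>T. \<forall>s\<in>T. \<forall>t\<in>T. lt r s \<and> lt s t \<longrightarrow> lt r t) \<and>
     (\<forall>t\<in>T. Well_order (pred_rel T lt t))"

definition on_level :: "'k rel \<Rightarrow> 'a set \<Rightarrow> ('a \<Rightarrow> 'a \<Rightarrow> bool) \<Rightarrow> 'a \<Rightarrow> bool" where
  "on_level k T lt t \<longleftrightarrow> t \<in> T \<and> (pred_rel T lt t, k) \<in> ordIso"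

(* height kappa+1: every level is <= kappa, and level kappa is nonempty *)
definition height_succ :: "'k rel \<Rightarrow> 'a set \<Rightarrow> ('a \<Rightarrow> 'a \<Rightarrow> bool) \<Rightarrow> bool" where
  "height_succ k T lt \<longleftrightarrow>
     (\<forall>t\<in>T. (pred_rel T lt t, k) \<in> ordLeq) \<and> (\<exists>t. on_level k T lt t)"

definition subtree :: "'a set \<Rightarrow> ('a \<Rightarrow> 'a \<Rightarrow> bool) \<Rightarrow> 'a set \<Rightarrow> bool" where
  "subtree T lt Y \<longleftrightarrow> Y \<subseteq> T \<and> (\<forall>y\<in>Y. \<forall>x\<in>T. lt x y \<longrightarrow> x \<in> Y)"

definition closed_in_tree :: "'k rel \<Rightarrow> 'a set \<Rightarrow> ('a \<Rightarrow> 'a \<Rightarrow> bool) \<Rightarrow> 'a set \<Rightarrow> bool" where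
  "closed_in_tree k T lt Y \<longleftrightarrow>
     (\<forall>t. on_level k T lt t \<and> (\<forall>s\<in>T. lt s t \<longrightarrow> s \<in> Y) \<longrightarrow> t \<in> Y)"

(* ===== The Boolean algebra B_T =====
   Free Boolean algebra on generators: Boolean terms modulo equivalence under all
   two-valued valuations (Lindenbaum algebra). *)

datatype 'a bterm = BVar 'a | BBot | BTop | BNeg "'a bterm"
  | BAnd "'a bterm" "'a bterm" | BOr "'a bterm" "'a bterm"

primrec bvars :: "'a bterm \<Rightarrow> 'a set" where
  "bvars (BVar a) = {a}"
| "bvars BBot = {}"
| "bvars BTop = {}"
| "bvars (BNeg p) = bvars p"
| "bvars (BAnd p q) = bvars p \<union> bvars q"
| "bvars (BOr p q) = bvars p \<union> bvars q"

primrec beval :: "('a \<Rightarrow> bool) \<Rightarrow> 'a bterm \<Rightarrow> bool" where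
  "beval v (BVar a) = v a"
| "beval v BBot = False"
| "beval v BTop = True"
| "beval v (BNeg p) = (\<not> beval v p)"
| "beval v (BAnd p q) = (beval v p \<and> beval v q)"
| "beval v (BOr p q) = (beval v p \<or> beval v q)"

definition free_le :: "'a bterm \<Rightarrow> 'a bterm \<Rightarrow> bool" where
  "free_le p q \<longleftrightarrow> (\<forall>v. beval v p \<longrightarrow> beval v q)"

(* the ideal generated by x_s * -x_t  (s <=_T t): elements below a finite join of generators *)
definition tree_ideal :: "'a set \<Rightarrow> ('a \<Rightarrow> 'a \<Rightarrow> bool) \<Rightarrow> 'a bterm set" where
  "tree_ideal T lt = {c. bvars c \<subseteq> T \<and> (\<exists>l. set l \<subseteq> {(s, t). s \<in> T \<and> t \<in> T \<and> tree_le lt s t} \<and>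
       free_le c (foldr (\<lambda>(s, t) acc. BOr (BAnd (BVar s) (BNeg (BVar t))) acc) l BBot))}"

definition bsymdiff :: "'a bterm \<Rightarrow> 'a bterm \<Rightarrow> 'a bterm" where
  "bsymdiff p q = BOr (BAnd p (BNeg q)) (BAnd q (BNeg p))"

definition bt_class :: "'a set \<Rightarrow> ('a \<Rightarrow> 'a \<Rightarrow> bool) \<Rightarrow> 'a bterm \<Rightarrow> 'a bterm set" where
  "bt_class T lt p = {q. bvars q \<subseteq> T \<and> bsymdiff p q \<in> tree_ideal T lt}"

(* B_Y : the subalgebra of B_T generated by {x_t : t \<in> Y}  (B_T itself for Y = T) *)
definition BA_gen :: "'a set \<Rightarrow> ('a \<Rightarrow> 'a \<Rightarrow> bool) \<Rightarrow> 'a set \<Rightarrow> 'a bterm set set" where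
  "BA_gen T lt Y = bt_class T lt ` {p. bvars p \<subseteq> Y}"

definition BT_le :: "'a set \<Rightarrow> ('a \<Rightarrow> 'a \<Rightarrow> bool) \<Rightarrow> 'a bterm set \<Rightarrow> 'a bterm set \<Rightarrow> bool" where
  "BT_le T lt P Q \<longleftrightarrow> (\<exists>p q. bvars p \<subseteq> T \<and> bvars q \<subseteq> T \<and>
      P = bt_class T lt p \<and> Q = bt_class T lt q \<and> BAnd p (BNeg q) \<in> tree_ideal T lt)"

end

theory Submission
  imports Defs
begin
unbundle cardinal_syntax


locale tsetup =
  fixes k :: "'k rel" and T :: "'a set" and lt :: "'a \<Rightarrow> 'a \<Rightarrow> bool"
  assumes card: "Card_order k"
    and reg: "regularCard k"
    and unc: "(natLeq, k) \<in> ordLess"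
    and tree: "is_tree T lt"
    and height: "height_succ k T lt"
begin
unbundle cardinal_syntax

definition pred :: "'a \<Rightarrow> 'a set" where
  "pred t = {s\<in>T. lt s t}"

lemma WO: "Well_order k"
  using card unfolding card_order_on_def by simp

lemma inf_k: "infinite (Field k)"
proof
  assume "finite (Field k)"
  hence "|Field k| <o natLeq" using finite_iff_ordLess_natLeq by blast
  moreover have "k =o |Field k|" using card card_of_Field_ordIso ordIso_symmetric by blast
  ultimately have "k <o natLeq" using ordIso_ordLess_trans by blast
  thus False using unc not_ordLess_ordLeq ordLess_imp_ordLeq by blast
qed

lemma Cinf: "Cinfinite k"
  using inf_k card unfolding cinfinite_def by simp

lemma finite_small: "finite A \<Longrightarrow> |A| <o k"
  using finite_ordLess_infinite[OF card_of_Well_order WO _ inf_k] by (simp add: Field_card_of)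

lemma wok: "wo_rel k" using WO unfolding wo_rel_def .

lemma k_refl: "a \<in> Field k \<Longrightarrow> (a, a) \<in> k"
  using wo_rel.REFL[OF wok] unfolding refl_on_def by blast

lemma k_total: "a \<in> Field k \<Longrightarrow> b \<in> Field k \<Longrightarrow> (a, b) \<in> k \<or> (b, a) \<in> k"
  using wo_rel.TOTALS[OF wok] by blast

lemma k_antisym: "(a, b) \<in> k \<Longrightarrow> (b, a) \<in> k \<Longrightarrow> a = b"
  using wo_rel.ANTISYM[OF wok] unfolding antisym_def by blast

lemma k_trans: "(a, b) \<in> k \<Longrightarrow> (b, c) \<in> k \<Longrightarrow> (a, c) \<in> k"
  using wo_rel.TRANS[OF wok] unfolding trans_def by blast

lemma k_FieldL: "(a, b) \<in> k \<Longrightarrow> a \<in> Field k" unfolding Field_def by blast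
lemma k_FieldR: "(a, b) \<in> k \<Longrightarrow> b \<in> Field k" unfolding Field_def by blast

lemma union_small:
  assumes "|I| <o k" "\<And>i. i \<in> I \<Longrightarrow> |A i| <o k"
  shows "|\<Union>i\<in>I. A i| <o k"
  using card_of_UNION_ordLess_infinite_Field_regularCard[OF reg Cinf, of I A] assms by blast

lemma Un_small: "|A| <o k \<Longrightarrow> |B| <o k \<Longrightarrow> |A \<union> B| <o k"
  by (rule card_of_Un_ordLess_infinite_Field[OF inf_k card])

lemma subset_small: "|A| <o k \<Longrightarrow> B \<subseteq> A \<Longrightarrow> |B| <o k"
  by (rule ordLeq_ordLess_trans[OF card_of_mono1])

lemma image_small: "|A| <o k \<Longrightarrow> |f ` A| <o k"
  by (rule ordLeq_ordLess_trans[OF card_of_image])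

lemma nat_small: "|UNIV :: nat set| <o k"
  by (rule ordIso_ordLess_trans[OF card_of_nat unc])

lemma underS_small: "a \<in> Field k \<Longrightarrow> |underS k a| <o k"
  by (rule card_of_underS[OF card])

lemma tirr: "t \<in> T \<Longrightarrow> \<not> lt t t"
  using tree unfolding is_tree_def by blast

lemma ttrans: "r \<in> T \<Longrightarrow> s \<in> T \<Longrightarrow> t \<in> T \<Longrightarrow> lt r s \<Longrightarrow> lt s t \<Longrightarrow> lt r t"
  using tree unfolding is_tree_def by blast

lemma tasym: "s \<in> T \<Longrightarrow> t \<in> T \<Longrightarrow> lt s t \<Longrightarrow> \<not> lt t s"
  using tirr ttrans by blast

lemma pred_WO: "t \<in> T \<Longrightarrow> Well_order (pred_rel T lt t)"
  using tree unfolding is_tree_def by blast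

lemma Field_pred_rel: "Field (pred_rel T lt t) = pred t"
  unfolding pred_def pred_rel_def Field_def tree_le_def by auto

lemma tlin: "t \<in> T \<Longrightarrow> s \<in> pred t \<Longrightarrow> s' \<in> pred t \<Longrightarrow> s \<noteq> s' \<Longrightarrow> lt s s' \<or> lt s' s"
proof -
  assume a: "t \<in> T" "s \<in> pred t" "s' \<in> pred t" "s \<noteq> s'"
  have "wo_rel (pred_rel T lt t)" using pred_WO[OF a(1)] unfolding wo_rel_def .
  hence "(s, s') \<in> pred_rel T lt t \<or> (s', s) \<in> pred_rel T lt t"
    using wo_rel.TOTALS a(2,3) Field_pred_rel by metis
  thus ?thesis using a(4) unfolding pred_rel_def tree_le_def by auto
qed

lemma pred_sub: "pred t \<subseteq> T" unfolding pred_def by auto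

lemma pred_trans: "t \<in> T \<Longrightarrow> s \<in> pred t \<Longrightarrow> pred s \<subseteq> pred t"
  unfolding pred_def using ttrans by blast

definition lev :: "'a \<Rightarrow> 'a \<Rightarrow> 'k" where
  "lev t = (SOME f. embed (pred_rel T lt t) k f)"

lemma lev_embed: "t \<in> T \<Longrightarrow> embed (pred_rel T lt t) k (lev t)"
proof -
  assume "t \<in> T"
  hence "(pred_rel T lt t, k) \<in> ordLeq" using height unfolding height_succ_def by blast
  hence "\<exists>f. embed (pred_rel T lt t) k f" unfolding ordLeq_def by blast
  thus ?thesis unfolding lev_def by (rule someI_ex)
qed

lemma lev_Field: "t \<in> T \<Longrightarrow> s \<in> pred t \<Longrightarrow> lev t s \<in> Field k"
  using embed_Field[OF lev_embed, of t] Field_pred_rel[of t] by (simp add: image_subset_iff)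

lemma lev_inj: "t \<in> T \<Longrightarrow> inj_on (lev t) (pred t)"
  using embed_inj_on[OF pred_WO lev_embed, of t] Field_pred_rel[of t] by simp

lemma lev_mono: "t \<in> T \<Longrightarrow> s \<in> pred t \<Longrightarrow> s' \<in> pred t \<Longrightarrow> lt s' s \<Longrightarrow>
   lev t s' \<in> underS k (lev t s)"
proof -
  assume a: "t \<in> T" "s \<in> pred t" "s' \<in> pred t" "lt s' s"
  have "(s', s) \<in> pred_rel T lt t" using a unfolding pred_rel_def pred_def tree_le_def by auto
  hence "(lev t s', lev t s) \<in> k" using embed_compat[OF lev_embed[OF a(1)]] unfolding compat_def by blast
  moreover have "lev t s' \<noteq> lev t s" using lev_inj[OF a(1)] a tirr pred_sub
    unfolding inj_on_def by blast
  ultimately show ?thesis unfolding underS_def by blast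
qed

lemma lev_rev: "t \<in> T \<Longrightarrow> s \<in> pred t \<Longrightarrow> s' \<in> pred t \<Longrightarrow> lev t s' \<in> underS k (lev t s) \<Longrightarrow> lt s' s"
proof -
  assume a: "t \<in> T" "s \<in> pred t" "s' \<in> pred t" "lev t s' \<in> underS k (lev t s)"
  have "s \<noteq> s'" using a(4) unfolding underS_def by blast
  moreover have "\<not> lt s s'"
  proof
    assume "lt s s'"
    hence "lev t s \<in> underS k (lev t s')" using lev_mono a by blast
    with a(4) show False using k_antisym unfolding underS_def by blast
  qed
  ultimately show ?thesis using tlin a by blast
qed

lemma pred_small: "t \<in> T \<Longrightarrow> s \<in> pred t \<Longrightarrow> |pred s| <o k"
proof -
  assume a: "t \<in> T" "s \<in> pred t"
  have "lev t ` pred s \<subseteq> underS k (lev t s)"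
    using lev_mono[OF a(1) a(2)] pred_trans[OF a] a unfolding pred_def by blast
  moreover have "inj_on (lev t) (pred s)" using lev_inj[OF a(1)] pred_trans[OF a] inj_on_subset by blast
  ultimately have "|pred s| \<le>o |underS k (lev t s)|"
    using card_of_ordLeq by blast
  thus ?thesis using underS_small[OF lev_Field[OF a]] ordLeq_ordLess_trans by blast
qed

lemma lev_onto: "on_level k T lt t \<Longrightarrow> lev t ` pred t = Field k"
proof -
  assume a: "on_level k T lt t"
  hence t: "t \<in> T" unfolding on_level_def by blast
  obtain f where f: "iso (pred_rel T lt t) k f" using a unfolding on_level_def ordIso_def by blast
  have "\<forall>s\<in>pred t. lev t s = f s"
    using embed_unique[OF pred_WO[OF t] WO lev_embed[OF t], of f] f Field_pred_rel
    unfolding iso_def by blast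
  moreover have "f ` pred t = Field k" using f Field_pred_rel unfolding iso_def bij_betw_def by metis
  ultimately show ?thesis by (metis image_cong)
qed

lemma bounded:
  assumes lv: "on_level k T lt t" and L: "L \<subseteq> pred t" and Ls: "|L| <o k"
  shows "\<exists>s\<in>pred t. \<forall>l\<in>L. lt l s"
proof -
  have t: "t \<in> T" using lv unfolding on_level_def by blast
  let ?K = "lev t ` L"
  have "|?K| <o k" using image_small[OF Ls] .
  moreover have "?K \<subseteq> Field k" using lev_Field[OF t] L by blast
  ultimately have "\<not> cofinal ?K k" using reg not_ordLess_ordIso unfolding regularCard_def by blast
  then obtain g where g: "g \<in> Field k" "\<forall>b\<in>?K. \<not> (g \<noteq> b \<and> (g, b) \<in> k)"
    unfolding cofinal_def by blast
  obtain g' where g': "g' \<in> Field k" "g \<noteq> g'" "(g, g') \<in> k"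
    using infinite_Card_order_limit[OF card inf_k g(1)] by blast
  obtain s where s: "s \<in> pred t" "lev t s = g'" using lev_onto[OF lv] g' by (metis imageE)
  have "\<forall>l\<in>L. lt l s"
  proof
    fix l assume l: "l \<in> L"
    have "(lev t l, g) \<in> k"
    proof (cases "lev t l = g")
      case True thus ?thesis using g(1) k_refl by simp
    next
      case False
      hence "\<not> (g, lev t l) \<in> k" using g(2) l by auto
      moreover have "lev t l \<in> Field k" using lev_Field[OF t] l L by blast
      ultimately show ?thesis using k_total g(1) by blast
    qed
    hence "lev t l \<in> underS k g'" using g' k_trans k_antisym unfolding underS_def by blast
    thus "lt l s" using lev_rev[OF t s(1)] l L s(2) by blast
  qed
  thus ?thesis using s by blast
qed


end


context tsetup
begin

definition mono_val :: "('a \<Rightarrow> bool) \<Rightarrow> bool" where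
  "mono_val v \<longleftrightarrow> (\<forall>s\<in>T. \<forall>t\<in>T. lt s t \<longrightarrow> v s \<longrightarrow> v t)"

lemma finite_bvars: "finite (bvars p)"
  by (induction p) auto

lemma beval_cong: "(\<And>x. x \<in> bvars p \<Longrightarrow> v x = w x) \<Longrightarrow> beval v p = beval w p"
  by (induction p) auto

lemma foldr_eval:
  "beval v (foldr (\<lambda>(s, t) acc. BOr (BAnd (BVar s) (BNeg (BVar t))) acc) l BBot) \<longleftrightarrow>
   (\<exists>(s, t)\<in>set l. v s \<and> \<not> v t)"
  by (induction l) auto

lemma ideal_iff:
  "c \<in> tree_ideal T lt \<longleftrightarrow> bvars c \<subseteq> T \<and> (\<forall>v. mono_val v \<longrightarrow> \<not> beval v c)"
proof
  assume "c \<in> tree_ideal T lt"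
  then obtain l where l: "bvars c \<subseteq> T" "set l \<subseteq> {(s, t). s \<in> T \<and> t \<in> T \<and> tree_le lt s t}"
    "free_le c (foldr (\<lambda>(s, t) acc. BOr (BAnd (BVar s) (BNeg (BVar t))) acc) l BBot)"
    unfolding tree_ideal_def by blast
  show "bvars c \<subseteq> T \<and> (\<forall>v. mono_val v \<longrightarrow> \<not> beval v c)"
  proof (intro conjI allI impI notI)
    fix v assume m: "mono_val v" and b: "beval v c"
    have "beval v (foldr (\<lambda>(s, t) acc. BOr (BAnd (BVar s) (BNeg (BVar t))) acc) l BBot)"
      using l(3) b unfolding free_le_def by blast
    hence "\<exists>(s, t)\<in>set l. v s \<and> \<not> v t" by (simp only: foldr_eval)
    then obtain s t where st: "(s, t) \<in> set l" "v s" "\<not> v t" by blast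
    hence stT: "s \<in> T" "t \<in> T" "tree_le lt s t" using l(2) by auto
    show False
    proof (cases "s = t")
      case True thus False using st by simp
    next
      case False
      hence "lt s t" using stT(3) unfolding tree_le_def by simp
      thus False using m st stT unfolding mono_val_def by blast
    qed
  qed (use l in blast)
next
  assume a: "bvars c \<subseteq> T \<and> (\<forall>v. mono_val v \<longrightarrow> \<not> beval v c)"
  let ?P = "{(s, t). s \<in> bvars c \<and> t \<in> bvars c \<and> tree_le lt s t}"
  have "finite ?P"
    by (rule finite_subset[of _ "bvars c \<times> bvars c"]) (auto simp: finite_bvars)
  then obtain l where l: "set l = ?P" using finite_list by blast
  have "free_le c (foldr (\<lambda>(s, t) acc. BOr (BAnd (BVar s) (BNeg (BVar t))) acc) l BBot)"
    unfolding free_le_def foldr_eval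
  proof (intro allI impI)
    fix v assume b: "beval v c"
    show "\<exists>(s, t)\<in>set l. v s \<and> \<not> v t"
    proof (rule ccontr)
      assume "\<not> ?thesis"
      note nt = this
      have nv: "v t" if "s \<in> bvars c" "t \<in> bvars c" "tree_le lt s t" "v s" for s t
      proof -
        have "(s, t) \<in> set l" using l that by simp
        thus "v t" using nt that(4) by blast
      qed
      define w where "w z = (\<exists>s\<in>bvars c. v s \<and> tree_le lt s z)" for z
      have "mono_val w" unfolding mono_val_def
      proof (intro ballI impI)
        fix s t assume st: "s \<in> T" "t \<in> T" "lt s t" "w s"
        then obtain x where x: "x \<in> bvars c" "v x" "tree_le lt x s" unfolding w_def by blast
        have "x \<in> T" using x(1) a by blast
        hence "tree_le lt x t" using x(3) st ttrans unfolding tree_le_def by blast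
        thus "w t" unfolding w_def using x by blast
      qed
      moreover have "beval w c = beval v c"
      proof (rule beval_cong)
        fix x assume x: "x \<in> bvars c"
        show "w x = v x"
        proof
          assume "w x"
          then obtain s where s: "s \<in> bvars c" "v s" "tree_le lt s x" unfolding w_def by blast
          show "v x" by (rule nv[OF s(1) x s(3) s(2)])
        next
          assume "v x" thus "w x" unfolding w_def using x by (auto simp: tree_le_def)
        qed
      qed
      ultimately have "\<not> beval v c" using a by metis
      thus False using b by simp
    qed
  qed
  moreover have "set l \<subseteq> {(s, t). s \<in> T \<and> t \<in> T \<and> tree_le lt s t}" using l a by auto
  ultimately show "c \<in> tree_ideal T lt" unfolding tree_ideal_def using a by blast
qed

definition eqv :: "'a bterm \<Rightarrow> 'a bterm \<Rightarrow> bool" where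
  "eqv p q \<longleftrightarrow> (\<forall>v. mono_val v \<longrightarrow> beval v p = beval v q)"

abbreviation cls where "cls \<equiv> bt_class T lt"

lemma cls_eq: "bvars p \<subseteq> T \<Longrightarrow> cls p = {q. bvars q \<subseteq> T \<and> eqv p q}"
  unfolding bt_class_def ideal_iff eqv_def bsymdiff_def by auto

lemma cls_bad: "\<not> bvars p \<subseteq> T \<Longrightarrow> cls p = {}"
  unfolding bt_class_def ideal_iff bsymdiff_def by auto

lemma cls_eq_iff: "bvars p \<subseteq> T \<Longrightarrow> bvars q \<subseteq> T \<Longrightarrow> cls p = cls q \<longleftrightarrow> eqv p q"
proof
  assume a: "bvars p \<subseteq> T" "bvars q \<subseteq> T" "cls p = cls q"
  have "q \<in> cls q" using a(2) cls_eq[OF a(2)] by (simp add: eqv_def)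
  thus "eqv p q" using a(3) cls_eq[OF a(1)] by blast
next
  assume a: "bvars p \<subseteq> T" "bvars q \<subseteq> T" "eqv p q"
  have "eqv p r = eqv q r" for r using a(3) unfolding eqv_def by auto
  thus "cls p = cls q" using cls_eq[OF a(1)] cls_eq[OF a(2)] by auto
qed

lemma BT_le_iff: "bvars p \<subseteq> T \<Longrightarrow> bvars q \<subseteq> T \<Longrightarrow>
   BT_le T lt (cls p) (cls q) \<longleftrightarrow> (\<forall>v. mono_val v \<longrightarrow> beval v p \<longrightarrow> beval v q)"
proof
  assume a: "bvars p \<subseteq> T" "bvars q \<subseteq> T" "BT_le T lt (cls p) (cls q)"
  then obtain p' q' where pq: "bvars p' \<subseteq> T" "bvars q' \<subseteq> T" "cls p = cls p'" "cls q = cls q'"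
    "BAnd p' (BNeg q') \<in> tree_ideal T lt" unfolding BT_le_def by blast
  have "eqv p p'" using cls_eq_iff[OF a(1) pq(1)] pq(3) by blast
  have "eqv q q'" using cls_eq_iff[OF a(2) pq(2)] pq(4) by blast
  show "\<forall>v. mono_val v \<longrightarrow> beval v p \<longrightarrow> beval v q"
    using pq(5) \<open>eqv p p'\<close> \<open>eqv q q'\<close> unfolding ideal_iff eqv_def by auto
next
  assume a: "bvars p \<subseteq> T" "bvars q \<subseteq> T" "\<forall>v. mono_val v \<longrightarrow> beval v p \<longrightarrow> beval v q"
  have "BAnd p (BNeg q) \<in> tree_ideal T lt" unfolding ideal_iff using a by simp
  thus "BT_le T lt (cls p) (cls q)" unfolding BT_le_def using a(1,2) by blast
qed

lemma mem_BA_gen: "x \<in> BA_gen T lt Y \<longleftrightarrow> (\<exists>p. bvars p \<subseteq> Y \<and> x = cls p)"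
  unfolding BA_gen_def by blast

lemma represent:
  assumes "finite S" "\<And>v w. (\<And>x. x \<in> S \<Longrightarrow> v x = w x) \<Longrightarrow> \<Phi> v = \<Phi> w"
  shows "\<exists>p. bvars p \<subseteq> S \<and> (\<forall>v. beval v p = \<Phi> v)"
  using assms
proof (induction S arbitrary: \<Phi> rule: finite_induct)
  case empty
  have "\<And>v. \<Phi> v = \<Phi> (\<lambda>_. True)" using empty by blast
  show ?case
  proof (cases "\<Phi> (\<lambda>_. True)")
    case True thus ?thesis using \<open>\<And>v. \<Phi> v = \<Phi> (\<lambda>_. True)\<close> by (intro exI[of _ BTop]) auto
  next
    case False thus ?thesis using \<open>\<And>v. \<Phi> v = \<Phi> (\<lambda>_. True)\<close> by (intro exI[of _ BBot]) auto
  qed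
next
  case (insert x S)
  obtain p1 where p1: "bvars p1 \<subseteq> S" "\<forall>v. beval v p1 = \<Phi> (v(x := True))"
  proof -
    have "\<Phi> (v(x := True)) = \<Phi> (w(x := True))" if "\<And>y. y \<in> S \<Longrightarrow> v y = w y" for v w
    proof -
      have h: "\<And>y. y \<in> insert x S \<Longrightarrow> (v(x := True)) y = (w(x := True)) y" using that by auto
      show ?thesis by (rule insert.prems[OF h])
    qed
    thus ?thesis using insert.IH[of "\<lambda>v. \<Phi> (v(x := True))"] that by blast
  qed
  obtain p0 where p0: "bvars p0 \<subseteq> S" "\<forall>v. beval v p0 = \<Phi> (v(x := False))"
  proof -
    have "\<Phi> (v(x := False)) = \<Phi> (w(x := False))" if "\<And>y. y \<in> S \<Longrightarrow> v y = w y" for v w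
    proof -
      have h: "\<And>y. y \<in> insert x S \<Longrightarrow> (v(x := False)) y = (w(x := False)) y" using that by auto
      show ?thesis by (rule insert.prems[OF h])
    qed
    thus ?thesis using insert.IH[of "\<lambda>v. \<Phi> (v(x := False))"] that by blast
  qed
  let ?p = "BOr (BAnd (BVar x) p1) (BAnd (BNeg (BVar x)) p0)"
  have "beval v ?p = \<Phi> v" for v
  proof (cases "v x")
    case True
    hence "v(x := True) = v" by (simp add: fun_upd_idem)
    thus ?thesis using True p1 by simp
  next
    case False
    hence "v(x := False) = v" by (simp add: fun_upd_idem)
    thus ?thesis using False p0 by simp
  qed
  thus ?case using p1 p0 by (intro exI[of _ ?p]) auto
qed

end



primrec tm :: "'a set \<Rightarrow> nat \<Rightarrow> 'a bterm set" where
  "tm S 0 = BVar ` S \<union> {BBot, BTop}"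
| "tm S (Suc n) = tm S n \<union> BNeg ` tm S n \<union> (\<lambda>(p, q). BAnd p q) ` (tm S n \<times> tm S n)
      \<union> (\<lambda>(p, q). BOr p q) ` (tm S n \<times> tm S n)"

lemma tm_mono: "m \<le> n \<Longrightarrow> tm S m \<subseteq> tm S n"
proof (induction n)
  case 0 thus ?case by simp
next
  case (Suc n)
  show ?case
  proof (cases "m = Suc n")
    case True thus ?thesis by simp
  next
    case False
    hence "m \<le> n" using Suc.prems by simp
    hence "tm S m \<subseteq> tm S n" using Suc.IH by blast
    thus ?thesis by auto
  qed
qed

lemma in_tm: "bvars p \<subseteq> S \<Longrightarrow> \<exists>n. p \<in> tm S n"
proof (induction p)
  case (BVar x) thus ?case by (intro exI[of _ 0]) simp
next
  case BBot thus ?case by (intro exI[of _ 0]) simp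
next
  case BTop thus ?case by (intro exI[of _ 0]) simp
next
  case (BNeg p)
  then obtain n where "p \<in> tm S n" by auto
  thus ?case by (intro exI[of _ "Suc n"]) simp
next
  case (BAnd p q)
  then obtain n m where nm: "p \<in> tm S n" "q \<in> tm S m" by auto
  hence "p \<in> tm S (max n m)" "q \<in> tm S (max n m)" using tm_mono[of n "max n m" S] tm_mono[of m "max n m" S] by auto
  hence "BAnd p q \<in> tm S (Suc (max n m))" by force
  thus ?case by blast
next
  case (BOr p q)
  then obtain n m where nm: "p \<in> tm S n" "q \<in> tm S m" by auto
  hence "p \<in> tm S (max n m)" "q \<in> tm S (max n m)" using tm_mono[of n "max n m" S] tm_mono[of m "max n m" S] by auto
  hence "BOr p q \<in> tm S (Suc (max n m))" by force
  thus ?case by blast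
qed

context tsetup
begin

lemma times_small: "|A| <o k \<Longrightarrow> |B| <o k \<Longrightarrow> |A \<times> B| <o k"
proof -
  assume a: "|A| <o k" "|B| <o k"
  have "A \<times> B = (\<Union>x\<in>A. Pair x ` B)" by auto
  moreover have "|\<Union>x\<in>A. Pair x ` B| <o k"
    by (rule union_small[OF a(1)]) (rule image_small[OF a(2)])
  ultimately show ?thesis by simp
qed

lemma tm_small: "|S| <o k \<Longrightarrow> |tm S n| <o k"
proof (induction n)
  case 0
  have "|BVar ` S \<union> {BBot, BTop}| <o k"
    using Un_small[OF image_small[OF 0] finite_small[of "{BBot, BTop}"]] by simp
  thus ?case by simp
next
  case (Suc n)
  hence h: "|tm S n| <o k" by simp
  have p: "|tm S n \<times> tm S n| <o k" by (rule times_small[OF h h])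
  show ?case using Un_small[OF Un_small[OF Un_small[OF h image_small[OF h]] image_small[OF p]] image_small[OF p]]
    by simp
qed

lemma terms_small: "|S| <o k \<Longrightarrow> |{p. bvars p \<subseteq> S}| <o k"
proof -
  assume a: "|S| <o k"
  have sub: "{p. bvars p \<subseteq> S} \<subseteq> (\<Union>n\<in>UNIV. tm S n)"
  proof
    fix p assume "p \<in> {p. bvars p \<subseteq> S}"
    then obtain n where "p \<in> tm S n" using in_tm by blast
    thus "p \<in> (\<Union>n\<in>UNIV. tm S n)" by blast
  qed
  have "|\<Union>n\<in>UNIV. tm S n| <o k"
    by (rule union_small[OF nat_small]) (rule tm_small[OF a])
  thus ?thesis by (rule subset_small[OF _ sub])
qed

lemma BA_small: "|S| <o k \<Longrightarrow> |BA_gen T lt S| <o k"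
  unfolding BA_gen_def by (rule image_small[OF terms_small])

lemma BA_mono: "S \<subseteq> S' \<Longrightarrow> BA_gen T lt S \<subseteq> BA_gen T lt S'"
  unfolding BA_gen_def by auto

lemma mono_val_up: "s \<in> T \<Longrightarrow> mono_val (\<lambda>z. tree_le lt s z)"
  unfolding mono_val_def tree_le_def using ttrans by blast

lemma amalg:
  assumes Y: "subtree T lt Y" and F: "F \<subseteq> T" and G: "G \<subseteq> Y"
    and S0: "F \<inter> Y \<subseteq> S0" "{g\<in>G. \<exists>f\<in>F - Y. lt g f} \<subseteq> S0"
    and u: "mono_val u" and v: "mono_val v" and uv: "\<And>y. y \<in> S0 \<Longrightarrow> u y = v y"
  shows "\<exists>w. mono_val w \<and> (\<forall>g\<in>G. w g = u g) \<and> (\<forall>f\<in>F. w f = v f)"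
proof -
  have YT: "Y \<subseteq> T" using Y unfolding subtree_def by blast
  have Ydown: "\<And>y x. y \<in> Y \<Longrightarrow> x \<in> T \<Longrightarrow> lt x y \<Longrightarrow> x \<in> Y" using Y unfolding subtree_def by blast
  define w where "w z = ((\<exists>g\<in>G. u g \<and> tree_le lt g z) \<or> (\<exists>f\<in>F. v f \<and> tree_le lt f z))" for z
  have um: "\<And>s t. s \<in> T \<Longrightarrow> t \<in> T \<Longrightarrow> tree_le lt s t \<Longrightarrow> u s \<Longrightarrow> u t"
    using u unfolding mono_val_def tree_le_def by blast
  have vm: "\<And>s t. s \<in> T \<Longrightarrow> t \<in> T \<Longrightarrow> tree_le lt s t \<Longrightarrow> v s \<Longrightarrow> v t"
    using v unfolding mono_val_def tree_le_def by blast
  have tle_trans: "\<And>a b c. a \<in> T \<Longrightarrow> b \<in> T \<Longrightarrow> c \<in> T \<Longrightarrow> tree_le lt a b \<Longrightarrow> lt b c \<Longrightarrow> tree_le lt a c"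
    unfolding tree_le_def using ttrans by blast
  have "mono_val w" unfolding mono_val_def
  proof (intro ballI impI)
    fix s t assume st: "s \<in> T" "t \<in> T" "lt s t" "w s"
    show "w t"
    proof (cases "\<exists>g\<in>G. u g \<and> tree_le lt g s")
      case True
      then obtain g where g: "g \<in> G" "u g" "tree_le lt g s" by blast
      have "g \<in> T" using g(1) G YT by blast
      hence "tree_le lt g t" using tle_trans g(3) st by blast
      thus ?thesis unfolding w_def using g by blast
    next
      case False
      then obtain f where f: "f \<in> F" "v f" "tree_le lt f s" using st(4) unfolding w_def by blast
      have "f \<in> T" using f(1) F by blast
      hence "tree_le lt f t" using tle_trans f(3) st by blast
      thus ?thesis unfolding w_def using f by blast
    qed
  qed
  moreover have "\<forall>g\<in>G. w g = u g"
  proof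
    fix g assume g: "g \<in> G"
    have gT: "g \<in> T" using g G YT by blast
    show "w g = u g"
    proof
      assume "u g" thus "w g" unfolding w_def using g by (auto simp: tree_le_def)
    next
      assume "w g"
      show "u g"
      proof (cases "\<exists>g'\<in>G. u g' \<and> tree_le lt g' g")
        case True
        then obtain g' where g': "g' \<in> G" "u g'" "tree_le lt g' g" by blast
        have "g' \<in> T" using g'(1) G YT by blast
        thus ?thesis using um[OF _ gT g'(3) g'(2)] by blast
      next
        case False
        then obtain f where f: "f \<in> F" "v f" "tree_le lt f g" using \<open>w g\<close> unfolding w_def by blast
        have fT: "f \<in> T" using f(1) F by blast
        have "f \<in> Y"
        proof (cases "f = g")
          case True thus ?thesis using g G by blast
        next
          case False thus ?thesis using f(3) Ydown[of g f] g G fT unfolding tree_le_def by blast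
        qed
        hence "f \<in> S0" using S0(1) f(1) by blast
        hence "u f" using uv f(2) by blast
        thus ?thesis using um[OF fT gT f(3)] by blast
      qed
    qed
  qed
  moreover have "\<forall>f\<in>F. w f = v f"
  proof
    fix f assume f: "f \<in> F"
    have fT: "f \<in> T" using f F by blast
    show "w f = v f"
    proof
      assume "v f" thus "w f" unfolding w_def using f by (auto simp: tree_le_def)
    next
      assume "w f"
      show "v f"
      proof (cases "\<exists>f'\<in>F. v f' \<and> tree_le lt f' f")
        case True
        then obtain f' where f': "f' \<in> F" "v f'" "tree_le lt f' f" by blast
        have "f' \<in> T" using f'(1) F by blast
        thus ?thesis using vm[OF _ fT f'(3) f'(2)] by blast
      next
        case False
        then obtain g where g: "g \<in> G" "u g" "tree_le lt g f" using \<open>w f\<close> unfolding w_def by blast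
        have gT: "g \<in> T" using g(1) G YT by blast
        show ?thesis
        proof (cases "f \<in> Y")
          case True
          hence "f \<in> S0" using S0(1) f by blast
          moreover have "u f" using um[OF gT fT g(3) g(2)] .
          ultimately show ?thesis using uv by blast
        next
          case False
          hence "g \<noteq> f" using g(1) G by blast
          hence "lt g f" using g(3) unfolding tree_le_def by blast
          hence "g \<in> S0" using S0(2) g(1) f False by blast
          hence "v g" using uv g(2) by blast
          thus ?thesis using vm[OF gT fT g(3)] by blast
        qed
      qed
    qed
  qed
  ultimately show ?thesis by blast
qed

lemma psmall:
  assumes Y: "subtree T lt Y" and cl: "closed_in_tree k T lt Y" and f: "f \<in> T" "f \<notin> Y"
  shows "|{y\<in>Y. lt y f}| <o k"
proof (cases "\<exists>s\<in>pred f. s \<notin> Y")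
  case True
  then obtain s where s: "s \<in> pred f" "s \<notin> Y" by blast
  have "{y\<in>Y. lt y f} \<subseteq> pred s"
  proof
    fix y assume y: "y \<in> {y\<in>Y. lt y f}"
    have yT: "y \<in> T" using y Y unfolding subtree_def by blast
    hence yp: "y \<in> pred f" using y unfolding pred_def by blast
    have "y \<noteq> s" using y s by blast
    hence "lt y s \<or> lt s y" using tlin[OF f(1) yp s(1)] by blast
    moreover have "\<not> lt s y"
    proof
      assume "lt s y"
      hence "s \<in> Y" using Y y s(1) unfolding subtree_def pred_def by blast
      thus False using s by blast
    qed
    ultimately show "y \<in> pred s" using yT unfolding pred_def by blast
  qed
  thus ?thesis by (rule subset_small[OF pred_small[OF f(1) s(1)]])
next
  case False
  hence "\<not> on_level k T lt f" using cl f unfolding closed_in_tree_def pred_def by blast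
  hence "\<not> (pred_rel T lt f, k) \<in> ordIso" using f unfolding on_level_def by blast
  moreover have "(pred_rel T lt f, k) \<in> ordLeq" using height f unfolding height_succ_def by blast
  ultimately have "pred_rel T lt f <o k" using ordLeq_iff_ordLess_or_ordIso by blast
  moreover have "|pred f| \<le>o pred_rel T lt f"
    using card_of_least[of "pred f" "pred_rel T lt f"] pred_WO[OF f(1)] Field_pred_rel[of f] by simp
  ultimately have "|pred f| <o k" using ordLeq_ordLess_trans by blast
  moreover have "{y\<in>Y. lt y f} \<subseteq> pred f" using Y unfolding subtree_def pred_def by blast
  ultimately show ?thesis by (rule subset_small)
qed

end



context tsetup
begin

lemma S0_finite: "finite ((bvars b \<inter> Y) \<union> {x\<in>bvars g. \<exists>f\<in>bvars b - Y. lt x f})"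
  using finite_bvars[of b] finite_bvars[of g] by auto

lemma interp_up:
  assumes Y: "subtree T lt Y" and b: "bvars b \<subseteq> T" and g: "bvars g \<subseteq> Y"
    and le: "\<forall>v. mono_val v \<longrightarrow> beval v g \<longrightarrow> beval v b"
  shows "\<exists>p. bvars p \<subseteq> (bvars b \<inter> Y) \<union> {x\<in>bvars g. \<exists>f\<in>bvars b - Y. lt x f} \<and>
     (\<forall>v. mono_val v \<longrightarrow> beval v g \<longrightarrow> beval v p) \<and> (\<forall>v. mono_val v \<longrightarrow> beval v p \<longrightarrow> beval v b)"
proof -
  define S0 where "S0 = (bvars b \<inter> Y) \<union> {x\<in>bvars g. \<exists>f\<in>bvars b - Y. lt x f}"
  have S0a: "bvars b \<inter> Y \<subseteq> S0" and S0b: "{x\<in>bvars g. \<exists>f\<in>bvars b - Y. lt x f} \<subseteq> S0"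
    unfolding S0_def by blast+
  define \<Phi> where "\<Phi> v = (\<exists>u. mono_val u \<and> beval u g \<and> (\<forall>y\<in>S0. u y = v y))" for v
  have dep: "\<Phi> v = \<Phi> w" if "\<And>x. x \<in> S0 \<Longrightarrow> v x = w x" for v w
  proof -
    have "(\<forall>y\<in>S0. u y = v y) = (\<forall>y\<in>S0. u y = w y)" for u using that by auto
    thus ?thesis unfolding \<Phi>_def by simp
  qed
  obtain p where p: "bvars p \<subseteq> S0" "\<forall>v. beval v p = \<Phi> v"
  proof -
    have "finite S0" unfolding S0_def by (rule S0_finite[of b Y g])
    from represent[OF this dep] obtain q where q: "bvars q \<subseteq> S0 \<and> (\<forall>v. beval v q = \<Phi> v)"
      by (rule exE)
    show ?thesis by (rule that[OF conjunct1[OF q] conjunct2[OF q]])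
  qed
  have 1: "\<forall>v. mono_val v \<longrightarrow> beval v g \<longrightarrow> beval v p"
    using p(2) unfolding \<Phi>_def by blast
  have 2: "\<forall>v. mono_val v \<longrightarrow> beval v p \<longrightarrow> beval v b"
  proof (intro allI impI)
    fix v assume v: "mono_val v" "beval v p"
    then obtain u where u: "mono_val u" "beval u g" "\<forall>y\<in>S0. u y = v y"
      using p(2) unfolding \<Phi>_def by blast
    obtain w where w: "mono_val w" "\<forall>x\<in>bvars g. w x = u x" "\<forall>x\<in>bvars b. w x = v x"
      using amalg[OF Y b g S0a S0b u(1) v(1)] u(3) by blast
    have "beval w g = beval u g" by (rule beval_cong) (use w(2) in blast)
    hence "beval w b" using le w(1) u(2) by blast
    moreover have "beval w b = beval v b" by (rule beval_cong) (use w(3) in blast)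
    ultimately show "beval v b" by simp
  qed
  show ?thesis using p(1) 1 2 unfolding S0_def by blast
qed

lemma interp_down:
  assumes Y: "subtree T lt Y" and b: "bvars b \<subseteq> T" and g: "bvars g \<subseteq> Y"
    and le: "\<forall>v. mono_val v \<longrightarrow> beval v b \<longrightarrow> beval v g"
  shows "\<exists>p. bvars p \<subseteq> (bvars b \<inter> Y) \<union> {x\<in>bvars g. \<exists>f\<in>bvars b - Y. lt x f} \<and>
     (\<forall>v. mono_val v \<longrightarrow> beval v b \<longrightarrow> beval v p) \<and> (\<forall>v. mono_val v \<longrightarrow> beval v p \<longrightarrow> beval v g)"
proof -
  define S0 where "S0 = (bvars b \<inter> Y) \<union> {x\<in>bvars g. \<exists>f\<in>bvars b - Y. lt x f}"
  have S0a: "bvars b \<inter> Y \<subseteq> S0" and S0b: "{x\<in>bvars g. \<exists>f\<in>bvars b - Y. lt x f} \<subseteq> S0"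
    unfolding S0_def by blast+
  define \<Phi> where "\<Phi> v = (\<forall>u. mono_val u \<longrightarrow> (\<forall>y\<in>S0. u y = v y) \<longrightarrow> beval u g)" for v
  have dep: "\<Phi> v = \<Phi> w" if "\<And>x. x \<in> S0 \<Longrightarrow> v x = w x" for v w
  proof -
    have "(\<forall>y\<in>S0. u y = v y) = (\<forall>y\<in>S0. u y = w y)" for u using that by auto
    thus ?thesis unfolding \<Phi>_def by simp
  qed
  obtain p where p: "bvars p \<subseteq> S0" "\<forall>v. beval v p = \<Phi> v"
  proof -
    have "finite S0" unfolding S0_def by (rule S0_finite[of b Y g])
    from represent[OF this dep] obtain q where q: "bvars q \<subseteq> S0 \<and> (\<forall>v. beval v q = \<Phi> v)"
      by (rule exE)
    show ?thesis by (rule that[OF conjunct1[OF q] conjunct2[OF q]])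
  qed
  have 2: "\<forall>v. mono_val v \<longrightarrow> beval v p \<longrightarrow> beval v g"
    using p(2) unfolding \<Phi>_def by blast
  have 1: "\<forall>v. mono_val v \<longrightarrow> beval v b \<longrightarrow> beval v p"
  proof (intro allI impI)
    fix v assume v: "mono_val v" "beval v b"
    have "\<Phi> v" unfolding \<Phi>_def
    proof (intro allI impI)
      fix u assume u: "mono_val u" "\<forall>y\<in>S0. u y = v y"
      obtain w where w: "mono_val w" "\<forall>x\<in>bvars g. w x = u x" "\<forall>x\<in>bvars b. w x = v x"
        using amalg[OF Y b g S0a S0b u(1) v(1)] u(2) by blast
      have "beval w b = beval v b" by (rule beval_cong) (use w(3) in blast)
      hence "beval w g" using le w(1) v(2) by blast
      moreover have "beval w g = beval u g" by (rule beval_cong) (use w(2) in blast)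
      ultimately show "beval u g" by simp
    qed
    thus "beval v p" using p(2) by simp
  qed
  show ?thesis using p(1) 1 2 unfolding S0_def by blast
qed

end



context tsetup
begin

lemma up_mono: "A \<subseteq> T \<Longrightarrow> mono_val (\<lambda>z. \<exists>a\<in>A. u a \<and> tree_le lt a z)"
  unfolding mono_val_def
proof (intro ballI impI)
  fix s t assume A: "A \<subseteq> T" and st: "s \<in> T" "t \<in> T" "lt s t" "\<exists>a\<in>A. u a \<and> tree_le lt a s"
  then obtain a where a: "a \<in> A" "u a" "tree_le lt a s" by blast
  have "a \<in> T" using a(1) A by blast
  hence "tree_le lt a t" using a(3) st ttrans unfolding tree_le_def by blast
  thus "\<exists>a\<in>A. u a \<and> tree_le lt a t" using a by blast
qed

lemma up_agree: "A \<subseteq> T \<Longrightarrow> mono_val u \<Longrightarrow> x \<in> A \<Longrightarrow> (\<exists>a\<in>A. u a \<and> tree_le lt a x) = u x"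
proof
  assume A: "A \<subseteq> T" "mono_val u" "x \<in> A"
  assume "\<exists>a\<in>A. u a \<and> tree_le lt a x"
  then obtain a where a: "a \<in> A" "u a" "tree_le lt a x" by blast
  show "u x"
  proof (cases "a = x")
    case True thus ?thesis using a by simp
  next
    case False
    hence "lt a x" using a(3) unfolding tree_le_def by blast
    thus ?thesis using A a unfolding mono_val_def by blast
  qed
next
  assume "x \<in> A" "u x" thus "\<exists>a\<in>A. u a \<and> tree_le lt a x" unfolding tree_le_def by blast
qed

lemma part1_if:
  assumes Y: "subtree T lt Y" and cl: "closed_in_tree k T lt Y"
  shows "kappa_sub k (BT_le T lt) (BA_gen T lt Y) (BA_gen T lt T)"
proof -
  have YT: "Y \<subseteq> T" using Y unfolding subtree_def by blast
  have sub: "BA_gen T lt Y \<subseteq> BA_gen T lt T" by (rule BA_mono[OF YT])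
  have main: "cf_less k (BT_le T lt) {x\<in>BA_gen T lt Y. BT_le T lt x a} \<and>
      ci_less k (BT_le T lt) {x\<in>BA_gen T lt Y. BT_le T lt a x}" if a: "a \<in> BA_gen T lt T" for a
  proof -
    obtain b where b: "bvars b \<subseteq> T" "a = cls b" using a unfolding mem_BA_gen by blast
    define S where "S = (bvars b \<inter> Y) \<union> (\<Union>f\<in>bvars b - Y. {y\<in>Y. lt y f})"
    have SY: "S \<subseteq> Y" unfolding S_def by blast
    have Ss: "|S| <o k"
    proof -
      have 1: "|bvars b \<inter> Y| <o k" by (rule finite_small) (simp add: finite_bvars)
      have 2: "|\<Union>f\<in>bvars b - Y. {y\<in>Y. lt y f}| <o k"
      proof (rule union_small)
        show "|bvars b - Y| <o k" by (rule finite_small) (simp add: finite_bvars)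
      next
        fix f assume f: "f \<in> bvars b - Y"
        have "f \<in> T" "f \<notin> Y" using f b(1) by blast+
        thus "|{y\<in>Y. lt y f}| <o k" by (rule psmall[OF Y cl])
      qed
      show ?thesis unfolding S_def by (rule Un_small[OF 1 2])
    qed
    have BS: "|BA_gen T lt S| <o k" by (rule BA_small[OF Ss])
    have S0S: "(bvars b \<inter> Y) \<union> {x\<in>bvars g. \<exists>f\<in>bvars b - Y. lt x f} \<subseteq> S" if "bvars g \<subseteq> Y" for g
      using that unfolding S_def by blast
    have cf: "cf_less k (BT_le T lt) {x\<in>BA_gen T lt Y. BT_le T lt x a}"
      unfolding cf_less_def
    proof (rule exI[of _ "{c\<in>BA_gen T lt S. BT_le T lt c a}"], intro conjI)
      let ?C = "{c\<in>BA_gen T lt S. BT_le T lt c a}"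
      show "?C \<subseteq> {x\<in>BA_gen T lt Y. BT_le T lt x a}" using BA_mono[OF SY] by blast
      show "|?C| <o k" by (rule subset_small[OF BS]) blast
      show "\<forall>x\<in>{x\<in>BA_gen T lt Y. BT_le T lt x a}. \<exists>c\<in>?C. BT_le T lt x c"
      proof
        fix x assume x: "x \<in> {x\<in>BA_gen T lt Y. BT_le T lt x a}"
        obtain g where g: "bvars g \<subseteq> Y" "x = cls g" using x unfolding mem_BA_gen by blast
        have gT: "bvars g \<subseteq> T" using g(1) YT by blast
        have le: "\<forall>v. mono_val v \<longrightarrow> beval v g \<longrightarrow> beval v b"
          using x g(2) b(2) BT_le_iff[OF gT b(1)] by simp
        from interp_up[OF Y b(1) g(1) le] obtain p where
          p: "bvars p \<subseteq> (bvars b \<inter> Y) \<union> {x\<in>bvars g. \<exists>f\<in>bvars b - Y. lt x f} \<and>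
           (\<forall>v. mono_val v \<longrightarrow> beval v g \<longrightarrow> beval v p) \<and> (\<forall>v. mono_val v \<longrightarrow> beval v p \<longrightarrow> beval v b)"
          by (rule exE)
        have pS: "bvars p \<subseteq> S" using p S0S[OF g(1)] by blast
        have pT: "bvars p \<subseteq> T" using pS SY YT by blast
        have "cls p \<in> BA_gen T lt S" unfolding mem_BA_gen using pS by blast
        moreover have "BT_le T lt (cls p) a" using BT_le_iff[OF pT b(1)] p b(2) by simp
        moreover have "BT_le T lt x (cls p)" using BT_le_iff[OF gT pT] p g(2) by simp
        ultimately show "\<exists>c\<in>?C. BT_le T lt x c" by blast
      qed
    qed
    have ci: "ci_less k (BT_le T lt) {x\<in>BA_gen T lt Y. BT_le T lt a x}"
      unfolding ci_less_def
    proof (rule exI[of _ "{c\<in>BA_gen T lt S. BT_le T lt a c}"], intro conjI)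
      let ?C = "{c\<in>BA_gen T lt S. BT_le T lt a c}"
      show "?C \<subseteq> {x\<in>BA_gen T lt Y. BT_le T lt a x}" using BA_mono[OF SY] by blast
      show "|?C| <o k" by (rule subset_small[OF BS]) blast
      show "\<forall>x\<in>{x\<in>BA_gen T lt Y. BT_le T lt a x}. \<exists>c\<in>?C. BT_le T lt c x"
      proof
        fix x assume x: "x \<in> {x\<in>BA_gen T lt Y. BT_le T lt a x}"
        obtain g where g: "bvars g \<subseteq> Y" "x = cls g" using x unfolding mem_BA_gen by blast
        have gT: "bvars g \<subseteq> T" using g(1) YT by blast
        have le: "\<forall>v. mono_val v \<longrightarrow> beval v b \<longrightarrow> beval v g"
          using x g(2) b(2) BT_le_iff[OF b(1) gT] by simp
        from interp_down[OF Y b(1) g(1) le] obtain p where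
          p: "bvars p \<subseteq> (bvars b \<inter> Y) \<union> {x\<in>bvars g. \<exists>f\<in>bvars b - Y. lt x f} \<and>
           (\<forall>v. mono_val v \<longrightarrow> beval v b \<longrightarrow> beval v p) \<and> (\<forall>v. mono_val v \<longrightarrow> beval v p \<longrightarrow> beval v g)"
          by (rule exE)
        have pS: "bvars p \<subseteq> S" using p S0S[OF g(1)] by blast
        have pT: "bvars p \<subseteq> T" using pS SY YT by blast
        have "cls p \<in> BA_gen T lt S" unfolding mem_BA_gen using pS by blast
        moreover have "BT_le T lt a (cls p)" using BT_le_iff[OF b(1) pT] p b(2) by simp
        moreover have "BT_le T lt (cls p) x" using BT_le_iff[OF pT gT] p g(2) by simp
        ultimately show "\<exists>c\<in>?C. BT_le T lt c x" by blast
      qed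
    qed
    show ?thesis using cf ci by blast
  qed
  show ?thesis unfolding kappa_sub_def using sub main by blast
qed

end



context tsetup
begin

lemma part1_only:
  assumes Y: "subtree T lt Y" and ks: "kappa_sub k (BT_le T lt) (BA_gen T lt Y) (BA_gen T lt T)"
  shows "closed_in_tree k T lt Y"
  unfolding closed_in_tree_def
proof (intro allI impI, rule ccontr)
  fix t assume ta: "on_level k T lt t \<and> (\<forall>s\<in>T. lt s t \<longrightarrow> s \<in> Y)" and tn: "t \<notin> Y"
  have YT: "Y \<subseteq> T" using Y unfolding subtree_def by blast
  have lv: "on_level k T lt t" using ta by blast
  have tT: "t \<in> T" using lv unfolding on_level_def by blast
  have tvT: "bvars (BVar t) \<subseteq> T" using tT by simp
  have a: "cls (BVar t) \<in> BA_gen T lt T" unfolding mem_BA_gen using tvT by blast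
  have "cf_less k (BT_le T lt) {x\<in>BA_gen T lt Y. BT_le T lt x (cls (BVar t))}"
    using ks a unfolding kappa_sub_def by blast
  then obtain C where C: "C \<subseteq> {x\<in>BA_gen T lt Y. BT_le T lt x (cls (BVar t))}"
    "\<forall>x\<in>{x\<in>BA_gen T lt Y. BT_le T lt x (cls (BVar t))}. \<exists>c\<in>C. BT_le T lt x c" "|C| <o k"
    unfolding cf_less_def by blast
  define gc where "gc c = (SOME g. bvars g \<subseteq> Y \<and> c = cls g)" for c
  have gc: "bvars (gc c) \<subseteq> Y \<and> c = cls (gc c)" if "c \<in> C" for c
  proof -
    have "\<exists>g. bvars g \<subseteq> Y \<and> c = cls g" using that C(1) unfolding mem_BA_gen by blast
    thus ?thesis unfolding gc_def by (rule someI_ex)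
  qed
  define P where "P c = {y\<in>bvars (gc c). lt y t}" for c
  define L where "L = (\<Union>c\<in>C. P c)"
  have Lp: "L \<subseteq> pred t"
  proof
    fix y assume "y \<in> L"
    then obtain c where c: "c \<in> C" "y \<in> P c" unfolding L_def by blast
    have "y \<in> T" using gc[OF c(1)] c(2) YT unfolding P_def by blast
    thus "y \<in> pred t" using c(2) unfolding P_def pred_def by blast
  qed
  have Ls: "|L| <o k" unfolding L_def
  proof (rule union_small[OF C(3)])
    fix c show "|P c| <o k" by (rule finite_small) (simp add: P_def finite_bvars)
  qed
  obtain s where s: "s \<in> pred t" "\<forall>l\<in>L. lt l s" using bounded[OF lv Lp Ls] by blast
  have sT: "s \<in> T" and st: "lt s t" using s(1) unfolding pred_def by blast+
  have sY: "s \<in> Y" using ta sT st by blast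
  have svT: "bvars (BVar s) \<subseteq> T" using sT by simp
  have "BT_le T lt (cls (BVar s)) (cls (BVar t))"
    unfolding BT_le_iff[OF svT tvT] using sT tT st unfolding mono_val_def by simp
  moreover have "cls (BVar s) \<in> BA_gen T lt Y" unfolding mem_BA_gen using sY
    by (intro exI[of _ "BVar s"]) simp
  ultimately obtain c where c: "c \<in> C" "BT_le T lt (cls (BVar s)) c" using C(2) by blast
  define g where "g = gc c"
  have g: "bvars g \<subseteq> Y" "c = cls g" using gc[OF c(1)] unfolding g_def by blast+
  have gT: "bvars g \<subseteq> T" using g(1) YT by blast
  have "BT_le T lt c (cls (BVar t))" using C(1) c(1) by blast
  hence le_gt: "\<forall>v. mono_val v \<longrightarrow> beval v g \<longrightarrow> v t" using BT_le_iff[OF gT tvT] g(2) by simp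
  have le_sg: "\<forall>v. mono_val v \<longrightarrow> v s \<longrightarrow> beval v g" using BT_le_iff[OF svT gT] c(2) g(2) by simp
  define v where "v z = tree_le lt s z" for z
  have vm: "mono_val v" unfolding v_def by (rule mono_val_up[OF sT])
  have bg: "beval v g" using le_sg vm unfolding v_def tree_le_def by blast
  define w where "w z = (\<exists>a\<in>bvars g. v a \<and> tree_le lt a z)" for z
  have wm: "mono_val w" unfolding w_def by (rule up_mono[OF gT])
  have "beval w g = beval v g"
  proof (rule beval_cong)
    fix x assume "x \<in> bvars g"
    thus "w x = v x" unfolding w_def by (rule up_agree[OF gT vm])
  qed
  hence "w t" using le_gt wm bg by blast
  then obtain a where a: "a \<in> bvars g" "v a" "tree_le lt a t" unfolding w_def by blast
  have "a \<noteq> t" using a(1) g(1) tn by blast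
  hence "lt a t" using a(3) unfolding tree_le_def by blast
  hence "a \<in> L" unfolding L_def P_def g_def using a(1) c(1) g_def by blast
  hence as: "lt a s" using s(2) by blast
  have aT: "a \<in> T" using a(1) gT by blast
  show False
  proof (cases "s = a")
    case True thus False using as tirr aT by blast
  next
    case False
    hence "lt s a" using a(2) unfolding v_def tree_le_def by blast
    thus False using as tasym aT sT by blast
  qed
qed

lemma tree_if:
  assumes Y: "subtree T lt Y" and cl: "closed_in_tree k T lt Y"
  shows "kappa_sub k (tree_le lt) Y T"
  unfolding kappa_sub_def
proof (intro conjI ballI)
  show YT: "Y \<subseteq> T" using Y unfolding subtree_def by blast
  fix a assume aT: "a \<in> T"
  show "cf_less k (tree_le lt) {x\<in>Y. tree_le lt x a}"
  proof (cases "a \<in> Y")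
    case True
    show ?thesis unfolding cf_less_def
    proof (rule exI[of _ "{a}"], intro conjI)
      show "{a} \<subseteq> {x\<in>Y. tree_le lt x a}" using True by (simp add: tree_le_def)
      show "\<forall>x\<in>{x\<in>Y. tree_le lt x a}. \<exists>c\<in>{a}. tree_le lt x c" by simp
      show "|{a}| <o k" by (rule finite_small) simp
    qed
  next
    case False
    have eq: "{x\<in>Y. tree_le lt x a} = {y\<in>Y. lt y a}" using False unfolding tree_le_def by blast
    show ?thesis unfolding cf_less_def
    proof (rule exI[of _ "{x\<in>Y. tree_le lt x a}"], intro conjI)
      show "{x\<in>Y. tree_le lt x a} \<subseteq> {x\<in>Y. tree_le lt x a}" by simp
      show "\<forall>x\<in>{x\<in>Y. tree_le lt x a}. \<exists>c\<in>{x\<in>Y. tree_le lt x a}. tree_le lt x c"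
        by (auto simp: tree_le_def)
      show "|{x\<in>Y. tree_le lt x a}| <o k" unfolding eq by (rule psmall[OF Y cl aT False])
    qed
  qed
  show "ci_less k (tree_le lt) {x\<in>Y. tree_le lt a x}"
  proof (cases "a \<in> Y")
    case True
    show ?thesis unfolding ci_less_def
    proof (rule exI[of _ "{a}"], intro conjI)
      show "{a} \<subseteq> {x\<in>Y. tree_le lt a x}" using True by (simp add: tree_le_def)
      show "\<forall>x\<in>{x\<in>Y. tree_le lt a x}. \<exists>c\<in>{a}. tree_le lt c x" by simp
      show "|{a}| <o k" by (rule finite_small) simp
    qed
  next
    case False
    have eq: "{x\<in>Y. tree_le lt a x} = {}"
    proof -
      have "x \<notin> Y" if "tree_le lt a x" for x
      proof
        assume xY: "x \<in> Y"
        show False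
        proof (cases "a = x")
          case True thus False using xY False by blast
        next
          case ne: False
          hence "lt a x" using that unfolding tree_le_def by blast
          hence "a \<in> Y" using Y xY aT unfolding subtree_def by blast
          thus False using False by blast
        qed
      qed
      thus ?thesis by blast
    qed
    show ?thesis unfolding ci_less_def eq
      by (rule exI[of _ "{}"]) (simp add: finite_small)
  qed
qed

lemma tree_only:
  assumes Y: "subtree T lt Y" and ks: "kappa_sub k (tree_le lt) Y T"
  shows "closed_in_tree k T lt Y"
  unfolding closed_in_tree_def
proof (intro allI impI, rule ccontr)
  fix t assume ta: "on_level k T lt t \<and> (\<forall>s\<in>T. lt s t \<longrightarrow> s \<in> Y)" and tn: "t \<notin> Y"
  have lv: "on_level k T lt t" using ta by blast
  have tT: "t \<in> T" using lv unfolding on_level_def by blast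
  have YT: "Y \<subseteq> T" using Y unfolding subtree_def by blast
  have "cf_less k (tree_le lt) {x\<in>Y. tree_le lt x t}" using ks tT unfolding kappa_sub_def by blast
  then obtain C where C: "C \<subseteq> {x\<in>Y. tree_le lt x t}" "\<forall>x\<in>{x\<in>Y. tree_le lt x t}. \<exists>c\<in>C. tree_le lt x c"
    "|C| <o k" unfolding cf_less_def by blast
  have Cp: "C \<subseteq> pred t"
  proof
    fix c assume c: "c \<in> C"
    hence "c \<in> Y" "tree_le lt c t" using C(1) by blast+
    moreover hence "c \<noteq> t" using tn by blast
    ultimately show "c \<in> pred t" using YT unfolding pred_def tree_le_def by blast
  qed
  obtain s where s: "s \<in> pred t" "\<forall>l\<in>C. lt l s" using bounded[OF lv Cp C(3)] by blast
  have sT: "s \<in> T" and st: "lt s t" using s(1) unfolding pred_def by blast+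
  have "s \<in> {x\<in>Y. tree_le lt x t}" using ta sT st unfolding tree_le_def by blast
  then obtain c where c: "c \<in> C" "tree_le lt s c" using C(2) by blast
  have cs: "lt c s" using s(2) c(1) by blast
  have cT: "c \<in> T" using c(1) Cp unfolding pred_def by blast
  show False
  proof (cases "s = c")
    case True thus False using cs tirr cT by blast
  next
    case False
    hence "lt s c" using c(2) unfolding tree_le_def by blast
    thus False using cs tasym cT sT by blast
  qed
qed

end



context tsetup
begin

definition rep :: "'a bterm set \<Rightarrow> 'a bterm" where
  "rep c = (SOME p. bvars p \<subseteq> T \<and> c = cls p)"

definition supp :: "'a bterm set set \<Rightarrow> 'a set" where
  "supp X = (\<Union>c\<in>X \<inter> BA_gen T lt T. bvars (rep c))"

lemma rep: "c \<in> BA_gen T lt T \<Longrightarrow> bvars (rep c) \<subseteq> T \<and> c = cls (rep c)"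
proof -
  assume "c \<in> BA_gen T lt T"
  hence "\<exists>p. bvars p \<subseteq> T \<and> c = cls p" unfolding mem_BA_gen .
  thus ?thesis unfolding rep_def by (rule someI_ex)
qed

lemma supp_T: "supp X \<subseteq> T"
  unfolding supp_def using rep by blast

lemma supp_small: "|X| <o k \<Longrightarrow> |supp X| <o k"
  unfolding supp_def
proof (rule union_small)
  assume "|X| <o k" thus "|X \<inter> BA_gen T lt T| <o k" by (rule subset_small) blast
next
  fix c show "|bvars (rep c)| <o k" by (rule finite_small[OF finite_bvars])
qed

lemma supp_gen: "X \<subseteq> BA_gen T lt T \<Longrightarrow> supp X \<subseteq> Z \<Longrightarrow> X \<subseteq> BA_gen T lt Z"
proof
  fix c assume a: "X \<subseteq> BA_gen T lt T" "supp X \<subseteq> Z" "c \<in> X"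
  have c: "bvars (rep c) \<subseteq> T \<and> c = cls (rep c)" using rep a by blast
  have "bvars (rep c) \<subseteq> supp X" unfolding supp_def using a(1,3) by blast
  hence "bvars (rep c) \<subseteq> Z" using a(2) by blast
  thus "c \<in> BA_gen T lt Z" unfolding mem_BA_gen using c by blast
qed

definition book :: "'k \<Rightarrow> 'a set \<Rightarrow> 'a set" where
  "book \<alpha> S = {s\<in>T. \<exists>t\<in>S \<inter> T. lt s t \<and> lev t s \<in> underS k \<alpha>}"

lemma book_T: "book \<alpha> S \<subseteq> T" unfolding book_def by blast

lemma book_small: "\<alpha> \<in> Field k \<Longrightarrow> |S| <o k \<Longrightarrow> |book \<alpha> S| <o k"
proof -
  assume a: "\<alpha> \<in> Field k" "|S| <o k"
  have sub: "book \<alpha> S \<subseteq> (\<Union>t\<in>S \<inter> T. {s\<in>pred t. lev t s \<in> underS k \<alpha>})"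
    unfolding book_def pred_def by blast
  have "|\<Union>t\<in>S \<inter> T. {s\<in>pred t. lev t s \<in> underS k \<alpha>}| <o k"
  proof (rule union_small)
    show "|S \<inter> T| <o k" using a(2) by (rule subset_small) blast
  next
    fix t assume t: "t \<in> S \<inter> T"
    have tT: "t \<in> T" using t by blast
    have "inj_on (lev t) {s\<in>pred t. lev t s \<in> underS k \<alpha>}"
      by (rule inj_on_subset[OF lev_inj[OF tT]]) blast
    moreover have "lev t ` {s\<in>pred t. lev t s \<in> underS k \<alpha>} \<subseteq> underS k \<alpha>" by blast
    ultimately have "|{s\<in>pred t. lev t s \<in> underS k \<alpha>}| \<le>o |underS k \<alpha>|"
      by (rule card_of_ordLeq[THEN iffD1, OF exI, OF conjI])
    thus "|{s\<in>pred t. lev t s \<in> underS k \<alpha>}| <o k"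
      using underS_small[OF a(1)] by (rule ordLeq_ordLess_trans)
  qed
  thus ?thesis by (rule subset_small[OF _ sub])
qed

lemma book_cover: "t \<in> S \<Longrightarrow> t \<in> T \<Longrightarrow> lt s t \<Longrightarrow> s \<in> T \<Longrightarrow> lev t s \<in> underS k \<alpha> \<Longrightarrow> s \<in> book \<alpha> S"
  unfolding book_def by blast

lemma k_nonempty: "\<exists>a. a \<in> Field k"
  using inf_k by (metis finite.emptyI ex_in_conv)

lemma k_succ: "a \<in> Field k \<Longrightarrow> \<exists>b\<in>Field k. a \<in> underS k b"
  using infinite_Card_order_limit[OF card inf_k] unfolding underS_def by blast

lemma k_max2: "a \<in> Field k \<Longrightarrow> b \<in> Field k \<Longrightarrow> \<exists>c\<in>Field k. (a, c) \<in> k \<and> (b, c) \<in> k"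
proof -
  assume a: "a \<in> Field k" "b \<in> Field k"
  show ?thesis
  proof (cases "(a, b) \<in> k")
    case True thus ?thesis using a k_refl by blast
  next
    case False
    hence "(b, a) \<in> k" using k_total a by blast
    thus ?thesis using a k_refl by blast
  qed
qed

lemma k_above2: "a \<in> Field k \<Longrightarrow> b \<in> Field k \<Longrightarrow> \<exists>c\<in>Field k. a \<in> underS k c \<and> b \<in> underS k c"
proof -
  assume a: "a \<in> Field k" "b \<in> Field k"
  obtain m where m: "m \<in> Field k" "(a, m) \<in> k" "(b, m) \<in> k" using k_max2[OF a] by blast
  obtain c where c: "c \<in> Field k" "m \<in> underS k c" using k_succ[OF m(1)] by blast
  have "(m, c) \<in> k" "m \<noteq> c" using c(2) unfolding underS_def by blast+
  hence "a \<in> underS k c" "b \<in> underS k c" using m k_trans k_antisym unfolding underS_def by blast+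
  thus ?thesis using c(1) by blast
qed

lemma fin_stage:
  assumes fin: "finite V" and cov: "V \<subseteq> (\<Union>a\<in>Field k. X a)"
    and mono: "\<And>a b. a \<in> Field k \<Longrightarrow> b \<in> Field k \<Longrightarrow> (a, b) \<in> k \<Longrightarrow> X a \<subseteq> X b"
  shows "\<exists>b\<in>Field k. V \<subseteq> X b"
  using fin cov
proof (induction V rule: finite_induct)
  case empty thus ?case using k_nonempty by blast
next
  case (insert v V)
  have "V \<subseteq> (\<Union>a\<in>Field k. X a)" using insert.prems by blast
  from insert.IH[OF this] obtain b where b: "b \<in> Field k" "V \<subseteq> X b" by blast
  have "v \<in> (\<Union>a\<in>Field k. X a)" using insert.prems by blast
  then obtain a where a: "a \<in> Field k" "v \<in> X a" by blast
  obtain c where c: "c \<in> Field k" "(a, c) \<in> k" "(b, c) \<in> k" using k_max2[OF a(1) b(1)] by blast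
  have "X a \<subseteq> X c" by (rule mono[OF a(1) c(1) c(2)])
  moreover have "X b \<subseteq> X c" by (rule mono[OF b(1) c(1) c(3)])
  ultimately have "insert v V \<subseteq> X c" using a(2) b(2) by blast
  thus ?case using c(1) by blast
qed

lemma stage_less_underS: "stage_less k \<nu> \<alpha> \<longleftrightarrow> \<nu> \<in> underS k \<alpha>"
  unfolding stage_less_def underS_def by blast

lemma min_exists:
  assumes "a \<in> Field k" "\<not> P a"
  shows "\<exists>m\<in>Field k. \<not> P m \<and> (\<forall>\<nu>. stage_less k \<nu> m \<longrightarrow> P \<nu>)"
proof -
  have wf: "wf (k - Id)" using wo_rel.WF[OF wok] .
  obtain m where m: "m \<in> {a\<in>Field k. \<not> P a}" "\<And>y. (y, m) \<in> k - Id \<Longrightarrow> y \<notin> {a\<in>Field k. \<not> P a}"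
    using wfE_min[OF wf, of a "{a\<in>Field k. \<not> P a}"] assms by blast
  have "P \<nu>" if "stage_less k \<nu> m" for \<nu>
  proof -
    have "(\<nu>, m) \<in> k - Id" using that unfolding stage_less_def by blast
    moreover have "\<nu> \<in> Field k" using that unfolding stage_less_def by (blast intro: k_FieldL)
    ultimately show ?thesis using m(2) by blast
  qed
  thus ?thesis using m(1) by blast
qed

lemma k_induct:
  assumes "\<And>\<alpha>. \<alpha> \<in> Field k \<Longrightarrow> (\<And>\<nu>. stage_less k \<nu> \<alpha> \<Longrightarrow> P \<nu>) \<Longrightarrow> P \<alpha>"
  shows "\<alpha> \<in> Field k \<Longrightarrow> P \<alpha>"
proof -
  have "\<forall>\<alpha>. \<alpha> \<in> Field k \<longrightarrow> P \<alpha>"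
  proof (rule ccontr)
    assume "\<not> ?thesis"
    then obtain a where "a \<in> Field k" "\<not> P a" by blast
    then obtain m where m: "m \<in> Field k" "\<not> P m" "\<forall>\<nu>. stage_less k \<nu> m \<longrightarrow> P \<nu>"
      using min_exists[of a P] by blast
    thus False using assms[of m] by blast
  qed
  thus "\<alpha> \<in> Field k \<Longrightarrow> P \<alpha>" by blast
qed

end



context tsetup
begin

lemma stage_trans: "stage_less k a b \<Longrightarrow> stage_less k b c \<Longrightarrow> stage_less k a c"
  unfolding stage_less_def using k_trans k_antisym by blast

lemma stage_Field: "stage_less k a b \<Longrightarrow> a \<in> Field k"
  unfolding stage_less_def by (blast intro: k_FieldL)

lemma stage_cases: "a \<in> Field k \<Longrightarrow> b \<in> Field k \<Longrightarrow> a = b \<or> stage_less k a b \<or> stage_less k b a"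
  unfolding stage_less_def using k_total by blast

lemma I_transfer:
  assumes wB: "winning_I k (BT_le T lt) (BA_gen T lt T) \<sigma>B"
  shows "\<exists>\<sigma>T. winning_I k (tree_le lt) T \<sigma>T"
proof -
  define BY where "BY ys = (\<lambda>\<nu>. BA_gen T lt (ys \<nu>))" for ys :: "'k \<Rightarrow> 'a set"
  define Sm where "Sm \<alpha> ys = supp (\<sigma>B \<alpha> (BY ys)) \<union> (\<Union>\<nu>\<in>underS k \<alpha>. ys \<nu>)" for \<alpha> ys
  define \<sigma>T where "\<sigma>T \<alpha> ys = Sm \<alpha> ys \<union> book \<alpha> (Sm \<alpha> ys)" for \<alpha> ys
  have stB: "strategy_I k \<sigma>B" using wB unfolding winning_I_def by blast
  have winB: "player_I_wins k (BT_le T lt) (BA_gen T lt T) xs ys"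
    if "\<forall>\<alpha>\<in>Field k. xs \<alpha> = \<sigma>B \<alpha> ys" for xs ys
    using wB that unfolding winning_I_def by blast
  have st: "strategy_I k \<sigma>T" unfolding strategy_I_def
  proof (intro ballI allI impI)
    fix \<alpha> and ys ys' :: "'k \<Rightarrow> 'a set" assume \<alpha>: "\<alpha> \<in> Field k" and eq: "\<forall>\<nu>. stage_less k \<nu> \<alpha> \<longrightarrow> ys \<nu> = ys' \<nu>"
    have "\<forall>\<nu>. stage_less k \<nu> \<alpha> \<longrightarrow> BY ys \<nu> = BY ys' \<nu>" using eq unfolding BY_def by simp
    hence "\<sigma>B \<alpha> (BY ys) = \<sigma>B \<alpha> (BY ys')" using stB \<alpha> unfolding strategy_I_def by blast
    moreover have "(\<Union>\<nu>\<in>underS k \<alpha>. ys \<nu>) = (\<Union>\<nu>\<in>underS k \<alpha>. ys' \<nu>)"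
      using eq unfolding stage_less_underS by auto
    ultimately have "Sm \<alpha> ys = Sm \<alpha> ys'" unfolding Sm_def by simp
    thus "\<sigma>T \<alpha> ys = \<sigma>T \<alpha> ys'" unfolding \<sigma>T_def by simp
  qed
  have win: "player_I_wins k (tree_le lt) T xs ys" if xs: "\<forall>\<alpha>\<in>Field k. xs \<alpha> = \<sigma>T \<alpha> ys" for xs ys
  proof -
    define xB where "xB \<alpha> = \<sigma>B \<alpha> (BY ys)" for \<alpha>
    define yB where "yB = BY ys"
    have pwB: "player_I_wins k (BT_le T lt) (BA_gen T lt T) xB yB"
      using winB[of xB "BY ys"] unfolding xB_def yB_def by blast
    let ?LIT = "legal_I k T xs ys" and ?LIIT = "legal_II k T xs ys"
    let ?LIB = "legal_I k (BA_gen T lt T) xB yB" and ?LIIB = "legal_II k (BA_gen T lt T) xB yB"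
    have xsa: "xs \<alpha> = Sm \<alpha> ys \<union> book \<alpha> (Sm \<alpha> ys)" if "\<alpha> \<in> Field k" for \<alpha>
      using xs that unfolding \<sigma>T_def by simp
    have suppx: "supp (xB \<alpha>) \<subseteq> xs \<alpha>" if "\<alpha> \<in> Field k" for \<alpha>
      using xsa[OF that] unfolding Sm_def xB_def by blast
    have LIIB: "?LIIB \<nu>" if "\<nu> \<in> Field k" "?LIB \<nu>" "?LIIT \<nu>" for \<nu>
    proof -
      have ysT: "ys \<nu> \<subseteq> T" "|ys \<nu>| <o k" "xs \<nu> \<subseteq> ys \<nu>" using that(3) unfolding legal_II_def by blast+
      have xBT: "xB \<nu> \<subseteq> BA_gen T lt T" using that(2) unfolding legal_I_def by blast
      have "xB \<nu> \<subseteq> BA_gen T lt (ys \<nu>)" by (rule supp_gen[OF xBT]) (use suppx[OF that(1)] ysT(3) in blast)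
      moreover have "BA_gen T lt (ys \<nu>) \<subseteq> BA_gen T lt T" by (rule BA_mono[OF ysT(1)])
      moreover have "|BA_gen T lt (ys \<nu>)| <o k" by (rule BA_small[OF ysT(2)])
      ultimately show ?thesis unfolding legal_II_def yB_def BY_def by blast
    qed
    define C where "C \<alpha> = ((\<forall>\<nu>. stage_less k \<nu> \<alpha> \<longrightarrow> ?LIIT \<nu>) \<longrightarrow> ?LIT \<alpha> \<and> ?LIB \<alpha>)" for \<alpha>
    have claim: "C \<alpha>" if "\<alpha> \<in> Field k" for \<alpha>
    proof (rule k_induct[of C, OF _ that])
      fix \<alpha> assume \<alpha>: "\<alpha> \<in> Field k" and IH: "\<And>\<nu>. stage_less k \<nu> \<alpha> \<Longrightarrow> C \<nu>"
      show "C \<alpha>" unfolding C_def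
      proof (intro impI)
        assume H: "\<forall>\<nu>. stage_less k \<nu> \<alpha> \<longrightarrow> ?LIIT \<nu>"
        have below: "?LIT \<nu> \<and> ?LIB \<nu> \<and> ?LIIT \<nu> \<and> ?LIIB \<nu>" if "stage_less k \<nu> \<alpha>" for \<nu>
        proof -
          have \<nu>F: "\<nu> \<in> Field k" using that by (rule stage_Field)
          have "\<forall>\<mu>. stage_less k \<mu> \<nu> \<longrightarrow> ?LIIT \<mu>" using H that stage_trans by blast
          hence 1: "?LIT \<nu> \<and> ?LIB \<nu>" using IH[OF that] unfolding C_def by blast
          have 2: "?LIIT \<nu>" using H that by blast
          have 3: "?LIIB \<nu>" using LIIB[OF \<nu>F] 1 2 by blast
          show ?thesis using 1 2 3 by blast
        qed
        have LIBa: "?LIB \<alpha>"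
        proof (rule ccontr)
          assume nB: "\<not> ?LIB \<alpha>"
          from pwB show False unfolding player_I_wins_def
          proof (elim disjE)
            assume "\<exists>\<alpha>'\<in>Field k. (\<forall>\<nu>. stage_less k \<nu> \<alpha>' \<longrightarrow> ?LIB \<nu> \<and> ?LIIB \<nu>) \<and> ?LIB \<alpha>' \<and> \<not> ?LIIB \<alpha>'"
            then obtain a' where a': "a' \<in> Field k" "\<forall>\<nu>. stage_less k \<nu> a' \<longrightarrow> ?LIB \<nu> \<and> ?LIIB \<nu>"
              "?LIB a'" "\<not> ?LIIB a'" by blast
            have "a' = \<alpha> \<or> stage_less k a' \<alpha> \<or> stage_less k \<alpha> a'" by (rule stage_cases[OF a'(1) \<alpha>])
            thus False
            proof (elim disjE)
              assume "a' = \<alpha>" thus False using a'(3) nB by simp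
            next
              assume "stage_less k a' \<alpha>" thus False using below a'(4) by blast
            next
              assume "stage_less k \<alpha> a'" thus False using a'(2) nB by blast
            qed
          next
            assume "(\<forall>\<alpha>\<in>Field k. ?LIB \<alpha> \<and> ?LIIB \<alpha>) \<and>
                    \<not> kappa_sub k (BT_le T lt) (\<Union>\<alpha>\<in>Field k. xB \<alpha>) (BA_gen T lt T)"
            thus False using nB \<alpha> by blast
          qed
        qed
        have ysT: "ys \<nu> \<subseteq> T" "|ys \<nu>| <o k" if "stage_less k \<nu> \<alpha>" for \<nu>
          using H that unfolding legal_II_def by blast+
        have SmT: "Sm \<alpha> ys \<subseteq> T" unfolding Sm_def using supp_T ysT(1) unfolding stage_less_underS by blast
        have xBs: "|xB \<alpha>| <o k" using LIBa unfolding legal_I_def by blast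
        have U: "|\<Union>\<nu>\<in>underS k \<alpha>. ys \<nu>| <o k"
        proof (rule union_small[OF underS_small[OF \<alpha>]])
          fix \<nu> assume "\<nu> \<in> underS k \<alpha>" thus "|ys \<nu>| <o k" using ysT(2) unfolding stage_less_underS by blast
        qed
        have Sms: "|Sm \<alpha> ys| <o k" unfolding Sm_def
          using Un_small[OF supp_small[OF xBs[unfolded xB_def]] U] .
        have LITa: "?LIT \<alpha>" unfolding legal_I_def
        proof (intro conjI allI impI)
          show "xs \<alpha> \<subseteq> T" using xsa[OF \<alpha>] SmT book_T by blast
          show "|xs \<alpha>| <o k" using xsa[OF \<alpha>] Un_small[OF Sms book_small[OF \<alpha> Sms]] by simp
          fix \<nu> assume "stage_less k \<nu> \<alpha>"
          thus "ys \<nu> \<subseteq> xs \<alpha>" using xsa[OF \<alpha>] unfolding Sm_def stage_less_underS by blast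
        qed
        show "?LIT \<alpha> \<and> ?LIB \<alpha>" using LITa LIBa by blast
      qed
    qed
    show ?thesis
    proof (cases "\<forall>\<alpha>\<in>Field k. ?LIIT \<alpha>")
      case False
      then obtain a where a: "a \<in> Field k" "\<not> ?LIIT a" by blast
      from min_exists[of a "\<lambda>\<alpha>. legal_II k T xs ys \<alpha>", OF a] obtain m where m: "m \<in> Field k" "\<not> ?LIIT m"
        "\<forall>\<nu>. stage_less k \<nu> m \<longrightarrow> ?LIIT \<nu>" by blast
      have "?LIT m" using claim[OF m(1)] m(3) unfolding C_def by blast
      moreover have "\<forall>\<nu>. stage_less k \<nu> m \<longrightarrow> ?LIT \<nu> \<and> ?LIIT \<nu>"
      proof (intro allI impI)
        fix \<nu> assume \<nu>: "stage_less k \<nu> m"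
        have "\<forall>\<mu>. stage_less k \<mu> \<nu> \<longrightarrow> ?LIIT \<mu>" using m(3) \<nu> stage_trans by blast
        hence "?LIT \<nu>" using claim[OF stage_Field[OF \<nu>]] unfolding C_def by blast
        thus "?LIT \<nu> \<and> ?LIIT \<nu>" using m(3) \<nu> by blast
      qed
      ultimately show ?thesis unfolding player_I_wins_def using m(1,2) by blast
    next
      case True
      have allT: "?LIT \<alpha> \<and> ?LIIT \<alpha>" if "\<alpha> \<in> Field k" for \<alpha>
        using claim[OF that] True that unfolding C_def by (blast intro: stage_Field)
      have allB: "?LIB \<alpha> \<and> ?LIIB \<alpha>" if "\<alpha> \<in> Field k" for \<alpha>
      proof -
        have "?LIB \<alpha>" using claim[OF that] True unfolding C_def by (blast intro: stage_Field)
        thus ?thesis using LIIB[OF that] allT[OF that] by blast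
      qed
      have nks: "\<not> kappa_sub k (BT_le T lt) (\<Union>\<alpha>\<in>Field k. xB \<alpha>) (BA_gen T lt T)"
        using pwB allB unfolding player_I_wins_def by blast
      define RT where "RT = (\<Union>\<alpha>\<in>Field k. xs \<alpha>)"
      have mono_xs: "xs a \<subseteq> xs b" if "a \<in> Field k" "b \<in> Field k" "(a, b) \<in> k" for a b
      proof (cases "a = b")
        case True thus ?thesis by simp
      next
        case False
        hence ab: "stage_less k a b" using that(3) unfolding stage_less_def by blast
        have "xs a \<subseteq> ys a" using allT[OF that(1)] unfolding legal_II_def by blast
        moreover have "ys a \<subseteq> xs b" using allT[OF that(2)] ab unfolding legal_I_def by blast
        ultimately show ?thesis by blast
      qed
      have RTT: "RT \<subseteq> T" using allT unfolding RT_def legal_I_def by blast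
      have sub: "subtree T lt RT" unfolding subtree_def
      proof (intro conjI ballI impI)
        show "RT \<subseteq> T" by (rule RTT)
        fix y x assume y: "y \<in> RT" "x \<in> T" "lt x y"
        obtain a where a: "a \<in> Field k" "y \<in> xs a" using y(1) unfolding RT_def by blast
        have yT: "y \<in> T" using y(1) RTT by blast
        have xp: "x \<in> pred y" unfolding pred_def using y by blast
        have g: "lev y x \<in> Field k" by (rule lev_Field[OF yT xp])
        obtain b where b: "b \<in> Field k" "a \<in> underS k b" "lev y x \<in> underS k b"
          using k_above2[OF a(1) g] by blast
        have "y \<in> ys a" using allT[OF a(1)] a(2) unfolding legal_II_def by blast
        hence "y \<in> Sm b ys" unfolding Sm_def using b(2) by blast
        hence "x \<in> book b (Sm b ys)" by (rule book_cover[OF _ yT y(3) y(2) b(3)])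
        hence "x \<in> xs b" using xsa[OF b(1)] by blast
        thus "x \<in> RT" unfolding RT_def using b(1) by blast
      qed
      have RB: "(\<Union>\<alpha>\<in>Field k. xB \<alpha>) = BA_gen T lt RT"
      proof
        show "(\<Union>\<alpha>\<in>Field k. xB \<alpha>) \<subseteq> BA_gen T lt RT"
        proof
          fix c assume "c \<in> (\<Union>\<alpha>\<in>Field k. xB \<alpha>)"
          then obtain a where a: "a \<in> Field k" "c \<in> xB a" by blast
          have "c \<in> yB a" using allB[OF a(1)] a(2) unfolding legal_II_def by blast
          hence c: "c \<in> BA_gen T lt (ys a)" unfolding yB_def BY_def .
          obtain b where b: "b \<in> Field k" "a \<in> underS k b" using k_succ[OF a(1)] by blast
          have "ys a \<subseteq> xs b" using allT[OF b(1)] b(2) unfolding legal_I_def stage_less_underS by blast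
          hence "ys a \<subseteq> RT" unfolding RT_def using b(1) by blast
          thus "c \<in> BA_gen T lt RT" using BA_mono c by blast
        qed
        show "BA_gen T lt RT \<subseteq> (\<Union>\<alpha>\<in>Field k. xB \<alpha>)"
        proof
          fix c assume "c \<in> BA_gen T lt RT"
          then obtain p where p: "bvars p \<subseteq> RT" "c = cls p" unfolding mem_BA_gen by blast
          have cov: "bvars p \<subseteq> (\<Union>a\<in>Field k. xs a)" using p(1) unfolding RT_def .
          obtain a where a: "a \<in> Field k" "bvars p \<subseteq> xs a"
            using fin_stage[OF finite_bvars cov mono_xs] by blast
          have "bvars p \<subseteq> ys a" using a allT[OF a(1)] unfolding legal_II_def by blast
          hence ca: "c \<in> yB a" unfolding yB_def BY_def mem_BA_gen using p(2) by blast
          obtain b where b: "b \<in> Field k" "a \<in> underS k b" using k_succ[OF a(1)] by blast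
          have "yB a \<subseteq> xB b" using allB[OF b(1)] b(2) unfolding legal_I_def stage_less_underS by blast
          thus "c \<in> (\<Union>\<alpha>\<in>Field k. xB \<alpha>)" using b(1) ca by blast
        qed
      qed
      have "\<not> kappa_sub k (tree_le lt) RT T"
      proof
        assume "kappa_sub k (tree_le lt) RT T"
        hence "closed_in_tree k T lt RT" by (rule tree_only[OF sub])
        hence "kappa_sub k (BT_le T lt) (BA_gen T lt RT) (BA_gen T lt T)" by (rule part1_if[OF sub])
        thus False using nks RB by simp
      qed
      thus ?thesis unfolding player_I_wins_def RT_def using allT by blast
    qed
  qed
  show ?thesis unfolding winning_I_def using st win by blast
qed

end



context tsetup
begin

lemma II_transfer:
  assumes wB: "winning_II k (BT_le T lt) (BA_gen T lt T) \<tau>B"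
  shows "\<exists>\<tau>T. winning_II k (tree_le lt) T \<tau>T"
proof -
  define XB where "XB xs = (\<lambda>\<nu>. BA_gen T lt (xs \<nu>))" for xs :: "'k \<Rightarrow> 'a set"
  define \<tau>T where "\<tau>T \<alpha> xs = xs \<alpha> \<union> supp (\<tau>B \<alpha> (XB xs)) \<union> book \<alpha> (xs \<alpha>)" for \<alpha> xs
  have stB: "strategy_II k \<tau>B" using wB unfolding winning_II_def by blast
  have winB: "\<not> player_I_wins k (BT_le T lt) (BA_gen T lt T) xs ys"
    if "\<forall>\<alpha>\<in>Field k. ys \<alpha> = \<tau>B \<alpha> xs" for xs ys
    using wB that unfolding winning_II_def by blast
  have st: "strategy_II k \<tau>T" unfolding strategy_II_def
  proof (intro ballI allI impI)
    fix \<alpha> and xs xs' :: "'k \<Rightarrow> 'a set" assume \<alpha>: "\<alpha> \<in> Field k" and eq: "\<forall>\<nu>. (\<nu>, \<alpha>) \<in> k \<longrightarrow> xs \<nu> = xs' \<nu>"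
    have "\<forall>\<nu>. (\<nu>, \<alpha>) \<in> k \<longrightarrow> XB xs \<nu> = XB xs' \<nu>" using eq unfolding XB_def by simp
    hence "\<tau>B \<alpha> (XB xs) = \<tau>B \<alpha> (XB xs')" using stB \<alpha> unfolding strategy_II_def by blast
    moreover have "xs \<alpha> = xs' \<alpha>" using eq k_refl[OF \<alpha>] by blast
    ultimately show "\<tau>T \<alpha> xs = \<tau>T \<alpha> xs'" unfolding \<tau>T_def by simp
  qed
  have win: "\<not> player_I_wins k (tree_le lt) T xs ys" if ys: "\<forall>\<alpha>\<in>Field k. ys \<alpha> = \<tau>T \<alpha> xs" for xs ys
  proof -
    define xB where "xB = XB xs"
    define yB where "yB \<alpha> = \<tau>B \<alpha> xB" for \<alpha>
    have npB: "\<not> player_I_wins k (BT_le T lt) (BA_gen T lt T) xB yB"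
      using winB[of yB xB] unfolding yB_def by blast
    let ?LIT = "legal_I k T xs ys" and ?LIIT = "legal_II k T xs ys"
    let ?LIB = "legal_I k (BA_gen T lt T) xB yB" and ?LIIB = "legal_II k (BA_gen T lt T) xB yB"
    have ysa: "ys \<alpha> = xs \<alpha> \<union> supp (yB \<alpha>) \<union> book \<alpha> (xs \<alpha>)" if "\<alpha> \<in> Field k" for \<alpha>
      using ys that unfolding \<tau>T_def yB_def xB_def by simp
    define D where "D \<alpha> = ((\<forall>\<nu>. (\<nu>, \<alpha>) \<in> k \<longrightarrow> ?LIT \<nu>) \<longrightarrow> ?LIB \<alpha> \<and> ?LIIB \<alpha> \<and> ?LIIT \<alpha>)" for \<alpha>
    have claim: "D \<alpha>" if "\<alpha> \<in> Field k" for \<alpha>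
    proof (rule k_induct[of D, OF _ that])
      fix \<alpha> assume \<alpha>: "\<alpha> \<in> Field k" and IH: "\<And>\<nu>. stage_less k \<nu> \<alpha> \<Longrightarrow> D \<nu>"
      show "D \<alpha>" unfolding D_def
      proof (intro impI)
        assume H: "\<forall>\<nu>. (\<nu>, \<alpha>) \<in> k \<longrightarrow> ?LIT \<nu>"
        have below: "?LIB \<nu> \<and> ?LIIB \<nu> \<and> ?LIIT \<nu>" if "stage_less k \<nu> \<alpha>" for \<nu>
        proof -
          have "\<forall>\<mu>. (\<mu>, \<nu>) \<in> k \<longrightarrow> ?LIT \<mu>" using H that k_trans unfolding stage_less_def by blast
          thus ?thesis using IH[OF that] unfolding D_def by blast
        qed
        have LITa: "?LIT \<alpha>" using H k_refl[OF \<alpha>] by blast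
        have xsT: "xs \<alpha> \<subseteq> T" "|xs \<alpha>| <o k" using LITa unfolding legal_I_def by blast+
        have LIBa: "?LIB \<alpha>" unfolding legal_I_def
        proof (intro conjI allI impI)
          show "xB \<alpha> \<subseteq> BA_gen T lt T" unfolding xB_def XB_def by (rule BA_mono[OF xsT(1)])
          show "|xB \<alpha>| <o k" unfolding xB_def XB_def by (rule BA_small[OF xsT(2)])
          fix \<nu> assume \<nu>: "stage_less k \<nu> \<alpha>"
          have yBT: "yB \<nu> \<subseteq> BA_gen T lt T" using below[OF \<nu>] unfolding legal_II_def by blast
          have "supp (yB \<nu>) \<subseteq> ys \<nu>" using ysa[OF stage_Field[OF \<nu>]] by blast
          moreover have "ys \<nu> \<subseteq> xs \<alpha>" using LITa \<nu> unfolding legal_I_def by blast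
          ultimately have "supp (yB \<nu>) \<subseteq> xs \<alpha>" by blast
          thus "yB \<nu> \<subseteq> xB \<alpha>" unfolding xB_def XB_def by (rule supp_gen[OF yBT])
        qed
        have LIIBa: "?LIIB \<alpha>"
        proof (rule ccontr)
          assume n: "\<not> ?LIIB \<alpha>"
          have "player_I_wins k (BT_le T lt) (BA_gen T lt T) xB yB" unfolding player_I_wins_def
            using \<alpha> below LIBa n by blast
          thus False using npB by blast
        qed
        have yBs: "|yB \<alpha>| <o k" using LIIBa unfolding legal_II_def by blast
        have LIITa: "?LIIT \<alpha>" unfolding legal_II_def
        proof (intro conjI)
          show "xs \<alpha> \<subseteq> ys \<alpha>" using ysa[OF \<alpha>] by blast
          show "ys \<alpha> \<subseteq> T" using ysa[OF \<alpha>] xsT(1) supp_T book_T by blast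
          show "|ys \<alpha>| <o k" using ysa[OF \<alpha>]
              Un_small[OF Un_small[OF xsT(2) supp_small[OF yBs]] book_small[OF \<alpha> xsT(2)]] by simp
        qed
        show "?LIB \<alpha> \<and> ?LIIB \<alpha> \<and> ?LIIT \<alpha>" using LIBa LIIBa LIITa by blast
      qed
    qed
    show ?thesis
    proof
      assume "player_I_wins k (tree_le lt) T xs ys"
      thus False unfolding player_I_wins_def
      proof (elim disjE)
        assume "\<exists>\<alpha>\<in>Field k. (\<forall>\<nu>. stage_less k \<nu> \<alpha> \<longrightarrow> ?LIT \<nu> \<and> ?LIIT \<nu>) \<and> ?LIT \<alpha> \<and> \<not> ?LIIT \<alpha>"
        then obtain a where a: "a \<in> Field k" "\<forall>\<nu>. stage_less k \<nu> a \<longrightarrow> ?LIT \<nu> \<and> ?LIIT \<nu>"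
          "?LIT a" "\<not> ?LIIT a" by blast
        have "\<forall>\<nu>. (\<nu>, a) \<in> k \<longrightarrow> ?LIT \<nu>"
        proof (intro allI impI)
          fix \<nu> assume "(\<nu>, a) \<in> k"
          thus "?LIT \<nu>"
          proof (cases "\<nu> = a")
            case True thus ?thesis using a(3) by simp
          next
            case False thus ?thesis using a(2) \<open>(\<nu>, a) \<in> k\<close> unfolding stage_less_def by blast
          qed
        qed
        thus False using claim[OF a(1)] a(4) unfolding D_def by blast
      next
        assume A: "(\<forall>\<alpha>\<in>Field k. ?LIT \<alpha> \<and> ?LIIT \<alpha>) \<and> \<not> kappa_sub k (tree_le lt) (\<Union>\<alpha>\<in>Field k. xs \<alpha>) T"
        have allT: "?LIT \<alpha> \<and> ?LIIT \<alpha>" if "\<alpha> \<in> Field k" for \<alpha> using A that by blast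
        have allB: "?LIB \<alpha> \<and> ?LIIB \<alpha>" if "\<alpha> \<in> Field k" for \<alpha>
        proof -
          have "\<forall>\<nu>. (\<nu>, \<alpha>) \<in> k \<longrightarrow> ?LIT \<nu>" using allT k_FieldL by blast
          thus ?thesis using claim[OF that] unfolding D_def by blast
        qed
        have ksB: "kappa_sub k (BT_le T lt) (\<Union>\<alpha>\<in>Field k. xB \<alpha>) (BA_gen T lt T)"
          using npB allB unfolding player_I_wins_def by blast
        define RT where "RT = (\<Union>\<alpha>\<in>Field k. xs \<alpha>)"
        have mono_xs: "xs a \<subseteq> xs b" if "a \<in> Field k" "b \<in> Field k" "(a, b) \<in> k" for a b
        proof (cases "a = b")
          case True thus ?thesis by simp
        next
          case False
          hence ab: "stage_less k a b" using that(3) unfolding stage_less_def by blast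
          have "xs a \<subseteq> ys a" using allT[OF that(1)] unfolding legal_II_def by blast
          moreover have "ys a \<subseteq> xs b" using allT[OF that(2)] ab unfolding legal_I_def by blast
          ultimately show ?thesis by blast
        qed
        have RTT: "RT \<subseteq> T" using allT unfolding RT_def legal_I_def by blast
        have sub: "subtree T lt RT" unfolding subtree_def
        proof (intro conjI ballI impI)
          show "RT \<subseteq> T" by (rule RTT)
          fix y x assume y: "y \<in> RT" "x \<in> T" "lt x y"
          obtain a where a: "a \<in> Field k" "y \<in> xs a" using y(1) unfolding RT_def by blast
          have yT: "y \<in> T" using y(1) RTT by blast
          have xp: "x \<in> pred y" unfolding pred_def using y by blast
          have g: "lev y x \<in> Field k" by (rule lev_Field[OF yT xp])
          obtain b where b: "b \<in> Field k" "a \<in> underS k b" "lev y x \<in> underS k b"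
            using k_above2[OF a(1) g] by blast
          have "(a, b) \<in> k" using b(2) unfolding underS_def by blast
          hence "y \<in> xs b" using mono_xs[OF a(1) b(1)] a(2) by blast
          hence "x \<in> book b (xs b)" by (rule book_cover[OF _ yT y(3) y(2) b(3)])
          hence "x \<in> ys b" using ysa[OF b(1)] by blast
          obtain c where c: "c \<in> Field k" "b \<in> underS k c" using k_succ[OF b(1)] by blast
          have "ys b \<subseteq> xs c" using allT[OF c(1)] c(2) unfolding legal_I_def stage_less_underS by blast
          thus "x \<in> RT" unfolding RT_def using c(1) \<open>x \<in> ys b\<close> by blast
        qed
        have RB: "(\<Union>\<alpha>\<in>Field k. xB \<alpha>) = BA_gen T lt RT"
        proof
          show "(\<Union>\<alpha>\<in>Field k. xB \<alpha>) \<subseteq> BA_gen T lt RT"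
          proof
            fix c assume "c \<in> (\<Union>\<alpha>\<in>Field k. xB \<alpha>)"
            then obtain a where a: "a \<in> Field k" "c \<in> xB a" by blast
            have "xs a \<subseteq> RT" unfolding RT_def using a(1) by blast
            thus "c \<in> BA_gen T lt RT" using BA_mono a(2) unfolding xB_def XB_def by blast
          qed
          show "BA_gen T lt RT \<subseteq> (\<Union>\<alpha>\<in>Field k. xB \<alpha>)"
          proof
            fix c assume "c \<in> BA_gen T lt RT"
            then obtain p where p: "bvars p \<subseteq> RT" "c = cls p" unfolding mem_BA_gen by blast
            have cov: "bvars p \<subseteq> (\<Union>a\<in>Field k. xs a)" using p(1) unfolding RT_def .
            obtain a where a: "a \<in> Field k" "bvars p \<subseteq> xs a"
              using fin_stage[OF finite_bvars cov mono_xs] by blast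
            have "c \<in> xB a" unfolding xB_def XB_def mem_BA_gen using p(2) a(2) by blast
            thus "c \<in> (\<Union>\<alpha>\<in>Field k. xB \<alpha>)" using a(1) by blast
          qed
        qed
        have "closed_in_tree k T lt RT" using part1_only[OF sub] ksB RB by simp
        hence "kappa_sub k (tree_le lt) RT T" by (rule tree_if[OF sub])
        thus False using A unfolding RT_def by blast
      qed
    qed
  qed
  show ?thesis unfolding winning_II_def using st win by blast
qed

end

theorem proposition11:
  fixes k :: "'k rel" and T :: "'a set" and lt :: "'a \<Rightarrow> 'a \<Rightarrow> bool"
  assumes kappa_card: "Card_order k"
    and kappa_regular: "regularCard k"
    and kappa_uncountable: "(natLeq, k) \<in> ordLess"
    and tree: "is_tree T lt"
    and height: "height_succ k T lt"
    and size: "(card_of T, cardSuc k) \<in> ordIso"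
  shows "(\<forall>Y. subtree T lt Y \<longrightarrow>
            (kappa_sub k (BT_le T lt) (BA_gen T lt Y) (BA_gen T lt T)
             \<longleftrightarrow> closed_in_tree k T lt Y))
       \<and> (game_undetermined k (tree_le lt) T
            \<longrightarrow> game_undetermined k (BT_le T lt) (BA_gen T lt T))"
proof -
  interpret tsetup k T lt
    using kappa_card kappa_regular kappa_uncountable tree height by (rule tsetup.intro)
  show ?thesis
  proof (intro conjI allI impI)
    fix Y assume Y: "subtree T lt Y"
    show "kappa_sub k (BT_le T lt) (BA_gen T lt Y) (BA_gen T lt T) \<longleftrightarrow> closed_in_tree k T lt Y"
      using part1_if[OF Y] part1_only[OF Y] by blast
  next
    assume u: "game_undetermined k (tree_le lt) T"
    show "game_undetermined k (BT_le T lt) (BA_gen T lt T)"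
      using u I_transfer II_transfer unfolding game_undetermined_def by blast
  qed
qed



end
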